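(* For $i=1,2$ let $\xi_i:[0,1]\to\mathbb{R}$ be a non-random function with continuous first derivative such that $\xi_i'$ vanishes at most on a countable subset of $[0,1]$. Let $a_{i,sh}, a_{i,sc}$ be real random variables with $P(a_{i,sc}=0)=0$, and suppose that for both $i=1,2$ the pair $(a_{i,sh},a_{i,sc})$ has the same given mean $(\mu_{sh},\mu_{sc})$ with $\mu_{sc}\neq 0$. Define $f_i(t)=a_{i,sh}+a_{i,sc}\,\xi_i(t)$, $t\in[0,1]$. Let $h_i$ be a random function on $[0,1]$ which, with probability one, is continuous with strictly positive and continuous first derivative and satisfies $h_i(0)=0$, $h_i(1)=1$, and assume $\mathrm{E}[h_i^{-1}(t)]=t$ for all $t\in[0,1]$. Set $\tilde f_i=f_i\circ h_i$. If $\tilde f_1\overset{d}{=}\tilde f_2$, then $h_1\overset{d}{=}h_2$, $\xi_1=\xi_2$, and $(a_{1,sh},a_{1,sc})\overset{d}{=}(a_{2,sh},a_{2,sc})$.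
   Context: $X_1\overset{d}{=}X_2$ means $X_1$ and $X_2$ have the same distribution. Random functions are regarded as random elements of $C^1[0,1]$ equipped with the metric $d(f,g)=\sup_t|f(t)-g(t)|+\sup_t|f'(t)-g'(t)|$ and its Borel $\sigma$-algebra. $h_i^{-1}$ denotes the inverse function of $h_i$. *)

theory Defs
  imports "HOL-Probability.Probability"
begin

text \<open>Functions on [0,1] are represented as real => real; only their values on [0,1]
  matter, and they are normalised by restriction to [0,1] (FuncSet.restrict).\<close>

definition C1_on :: "(real \<Rightarrow> real) \<Rightarrow> bool" where
  "C1_on f \<longleftrightarrow> (\<exists>f'. continuous_on {0..1} f' \<and>
      (\<forall>t\<in>{0..1}. (f has_real_derivative f' t) (at t within {0..1})))"

definition C1_deriv :: "(real \<Rightarrow> real) \<Rightarrow> real \<Rightarrow> real" where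
  "C1_deriv f t = vector_derivative f (at t within {0..1})"

definition C1_space :: "(real \<Rightarrow> real) set" where
  "C1_space = {f. f \<in> extensional {0..1} \<and> C1_on f}"

definition C1_dist :: "(real \<Rightarrow> real) \<Rightarrow> (real \<Rightarrow> real) \<Rightarrow> real" where
  "C1_dist f g = (SUP t\<in>{0..1}. \<bar>f t - g t\<bar>) + (SUP t\<in>{0..1}. \<bar>C1_deriv f t - C1_deriv g t\<bar>)"

definition C1_open :: "(real \<Rightarrow> real) set \<Rightarrow> bool" where
  "C1_open U \<longleftrightarrow> U \<subseteq> C1_space \<and>
     (\<forall>f\<in>U. \<exists>e>0. \<forall>g\<in>C1_space. C1_dist f g < e \<longrightarrow> g \<in> U)"

definition C1_borel :: "(real \<Rightarrow> real) measure" where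
  "C1_borel = sigma C1_space {U. C1_open U}"

definition C1_rv :: "'a measure \<Rightarrow> ('a \<Rightarrow> real \<Rightarrow> real) \<Rightarrow> bool" where
  "C1_rv M X \<longleftrightarrow> (\<lambda>\<omega>. restrict (X \<omega>) {0..1}) \<in> M \<rightarrow>\<^sub>M C1_borel"

definition C1_eqd :: "'a measure \<Rightarrow> ('a \<Rightarrow> real \<Rightarrow> real) \<Rightarrow> 'b measure \<Rightarrow> ('b \<Rightarrow> real \<Rightarrow> real) \<Rightarrow> bool" where
  "C1_eqd M1 X1 M2 X2 \<longleftrightarrow> C1_rv M1 X1 \<and> C1_rv M2 X2 \<and>
     distr M1 C1_borel (\<lambda>\<omega>. restrict (X1 \<omega>) {0..1}) = distr M2 C1_borel (\<lambda>\<omega>. restrict (X2 \<omega>) {0..1})"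

end

theory Submission
  imports Defs
begin


lemma C1_onD:
  assumes "C1_on f" "t \<in> {0..1}"
  shows "(f has_real_derivative C1_deriv f t) (at t within {0..1})"
proof -
  obtain f' where c: "continuous_on {0..1} f'" and d: "\<forall>t\<in>{0..1}. (f has_real_derivative f' t) (at t within {0..1})"
    using assms(1) unfolding C1_on_def by blast
  have "(f has_vector_derivative f' t) (at t within {0..1})"
    using d assms(2) by (simp add: has_real_derivative_iff_has_vector_derivative)
  then have "C1_deriv f t = f' t" unfolding C1_deriv_def
    using vector_derivative_within_closed_interval[of 0 1 t f "f' t"] assms(2) by simp
  then show ?thesis using d assms(2) by simp
qed

lemma C1_deriv_eq:
  assumes "C1_on f" "\<forall>t\<in>{0..1}. (f has_real_derivative f' t) (at t within {0..1})" "t \<in> {0..1}"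
  shows "C1_deriv f t = f' t"
proof -
  have "(f has_vector_derivative f' t) (at t within {0..1})"
    using assms by (simp add: has_real_derivative_iff_has_vector_derivative)
  then show "C1_deriv f t = f' t" unfolding C1_deriv_def
    using vector_derivative_within_closed_interval[of 0 1 t f "f' t"] assms(3) by simp
qed

lemma C1_onI:
  assumes "continuous_on {0..1} f'" "\<forall>t\<in>{0..1}. (f has_real_derivative f' t) (at t within {0..1})"
  shows "C1_on f" "\<And>t. t \<in> {0..1} \<Longrightarrow> C1_deriv f t = f' t"
proof -
  show "C1_on f" using assms unfolding C1_on_def by blast
  then show "\<And>t. t \<in> {0..1} \<Longrightarrow> C1_deriv f t = f' t" using C1_deriv_eq assms by blast
qed

lemma C1_on_cont_deriv:
  assumes "C1_on f" shows "continuous_on {0..1} (C1_deriv f)"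
proof -
  obtain f' where c: "continuous_on {0..1} f'" and d: "\<forall>t\<in>{0..1}. (f has_real_derivative f' t) (at t within {0..1})"
    using assms(1) unfolding C1_on_def by blast
  have "\<forall>t\<in>{0..1}. C1_deriv f t = f' t" using C1_deriv_eq[OF assms d] by blast
  then show ?thesis using continuous_on_eq[OF c] by (metis)
qed

lemma C1_on_cont:
  assumes "C1_on f" shows "continuous_on {0..1} f"
  by (rule DERIV_continuous_on[OF C1_onD[OF assms]])

lemma real_deriv_transform:
  assumes "(f has_real_derivative D) (at t within S)" "t \<in> S" "\<And>x. x \<in> S \<Longrightarrow> f x = g x"
  shows "(g has_real_derivative D) (at t within S)"
  using has_derivative_transform_within[OF assms(1)[unfolded has_field_derivative_def] zero_less_one assms(2), of g]
    assms(3) unfolding has_field_derivative_def by blast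

lemma C1_on_cong:
  assumes "C1_on f" "\<And>t. t \<in> {0..1} \<Longrightarrow> f t = g t"
  shows "C1_on g" "\<And>t. t \<in> {0..1} \<Longrightarrow> C1_deriv g t = C1_deriv f t"
proof -
  have d: "\<forall>t\<in>{0..1}. (g has_real_derivative C1_deriv f t) (at t within {0..1})"
    using C1_onD[OF assms(1)] assms(2) real_deriv_transform by blast
  show "C1_on g" "\<And>t. t \<in> {0..1} \<Longrightarrow> C1_deriv g t = C1_deriv f t"
    using C1_onI[OF C1_on_cont_deriv[OF assms(1)] d] by auto
qed

lemma C1_on_restrict:
  assumes "C1_on f"
  shows "C1_on (restrict f {0..1})" "\<And>t. t \<in> {0..1} \<Longrightarrow> C1_deriv (restrict f {0..1}) t = C1_deriv f t"
  using C1_on_cong[OF assms, of "restrict f {0..1}"] by auto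

lemma C1_space_restrict: "C1_on f \<Longrightarrow> restrict f {0..1} \<in> C1_space"
  using C1_on_restrict unfolding C1_space_def by auto

definition supn :: "(real \<Rightarrow> real) \<Rightarrow> real" where
  "supn u = (SUP t\<in>{0..1}. \<bar>u t\<bar>)"

lemma supn_bdd:
  fixes u :: "real \<Rightarrow> real"
  assumes "continuous_on {0..1} u" shows "bdd_above ((\<lambda>t. \<bar>u t\<bar>) ` {0..1})"
proof -
  have "continuous_on {0..1} (\<lambda>t. \<bar>u t\<bar>)" using assms by (rule continuous_on_rabs)
  then have "compact ((\<lambda>t. \<bar>u t\<bar>) ` {0..1})" by (intro compact_continuous_image) auto
  then show ?thesis by (intro bounded_imp_bdd_above compact_imp_bounded)
qed

lemma supn_upper: "continuous_on {0..1} u \<Longrightarrow> t \<in> {0..1} \<Longrightarrow> \<bar>u t\<bar> \<le> supn u"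
  unfolding supn_def by (rule cSUP_upper[OF _ supn_bdd]) auto

lemma supn_nonneg: assumes "continuous_on {0..1} u" shows "0 \<le> supn u"
proof -
  have "\<bar>u 0\<bar> \<le> supn u" by (rule supn_upper[OF assms]) simp
  then show ?thesis by linarith
qed

lemma supn_least: assumes "\<And>t. t \<in> {0..1} \<Longrightarrow> \<bar>u t\<bar> \<le> B" shows "supn u \<le> B"
proof -
  have ne: "{0..1::real} \<noteq> {}" by simp
  show ?thesis unfolding supn_def by (rule cSUP_least[OF ne]) (rule assms)
qed

lemma supn_triangle:
  assumes "continuous_on {0..1} u" "continuous_on {0..1} v"
  shows "supn (\<lambda>t. u t + v t) \<le> supn u + supn v"
proof (rule supn_least)
  fix t :: real assume t: "t \<in> {0..1}"
  have "\<bar>u t + v t\<bar> \<le> \<bar>u t\<bar> + \<bar>v t\<bar>" by simp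
  also have "\<dots> \<le> supn u + supn v" using supn_upper[OF assms(1) t] supn_upper[OF assms(2) t] by simp
  finally show "\<bar>u t + v t\<bar> \<le> supn u + supn v" .
qed

lemma C1_dist_supn: "C1_dist f g = supn (\<lambda>t. f t - g t) + supn (\<lambda>t. C1_deriv f t - C1_deriv g t)"
  unfolding C1_dist_def supn_def by simp

lemma C1_dist_ev:
  assumes "C1_on f" "C1_on g" "t \<in> {0..1}"
  shows "\<bar>f t - g t\<bar> \<le> C1_dist f g"
proof -
  have c1: "continuous_on {0..1} (\<lambda>t. f t - g t)"
    using C1_on_cont[OF assms(1)] C1_on_cont[OF assms(2)] by (rule continuous_on_diff)
  have c2: "continuous_on {0..1} (\<lambda>t. C1_deriv f t - C1_deriv g t)"
    using C1_on_cont_deriv[OF assms(1)] C1_on_cont_deriv[OF assms(2)] by (rule continuous_on_diff)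
  show ?thesis unfolding C1_dist_supn using supn_upper[OF c1 assms(3)] supn_nonneg[OF c2] by simp
qed

lemma C1_dist_ev_deriv:
  assumes "C1_on f" "C1_on g" "t \<in> {0..1}"
  shows "\<bar>C1_deriv f t - C1_deriv g t\<bar> \<le> C1_dist f g"
proof -
  have c1: "continuous_on {0..1} (\<lambda>t. f t - g t)"
    using C1_on_cont[OF assms(1)] C1_on_cont[OF assms(2)] by (rule continuous_on_diff)
  have c2: "continuous_on {0..1} (\<lambda>t. C1_deriv f t - C1_deriv g t)"
    using C1_on_cont_deriv[OF assms(1)] C1_on_cont_deriv[OF assms(2)] by (rule continuous_on_diff)
  show ?thesis unfolding C1_dist_supn using supn_upper[OF c2 assms(3)] supn_nonneg[OF c1] by simp
qed

lemma C1_dist_nonneg: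
  assumes "C1_on f" "C1_on g" shows "0 \<le> C1_dist f g"
  using C1_dist_ev[OF assms, of 0] by force

lemma C1_dist_sym: "C1_dist f g = C1_dist g f"
  unfolding C1_dist_def by (simp add: abs_minus_commute)

lemma C1_dist_triangle:
  assumes "C1_on f" "C1_on g" "C1_on h"
  shows "C1_dist f h \<le> C1_dist f g + C1_dist g h"
proof -
  have c: "continuous_on {0..1} (\<lambda>t. f t - g t)" "continuous_on {0..1} (\<lambda>t. g t - h t)"
          "continuous_on {0..1} (\<lambda>t. C1_deriv f t - C1_deriv g t)" "continuous_on {0..1} (\<lambda>t. C1_deriv g t - C1_deriv h t)"
    using C1_on_cont[OF assms(1)] C1_on_cont[OF assms(2)] C1_on_cont[OF assms(3)]
      C1_on_cont_deriv[OF assms(1)] C1_on_cont_deriv[OF assms(2)] C1_on_cont_deriv[OF assms(3)]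
    by (auto intro: continuous_on_diff)
  have "supn (\<lambda>t. f t - h t) \<le> supn (\<lambda>t. f t - g t) + supn (\<lambda>t. g t - h t)"
    using supn_triangle[OF c(1,2)] by simp
  moreover have "supn (\<lambda>t. C1_deriv f t - C1_deriv h t) \<le> supn (\<lambda>t. C1_deriv f t - C1_deriv g t) + supn (\<lambda>t. C1_deriv g t - C1_deriv h t)"
    using supn_triangle[OF c(3,4)] by simp
  ultimately show ?thesis unfolding C1_dist_supn by simp
qed

subsection \<open>Measurability via Lipschitz\<close>

lemma C1_open_subset: "{U. C1_open U} \<subseteq> Pow C1_space"
  unfolding C1_open_def by auto

lemma space_C1_borel: "space C1_borel = C1_space"
  unfolding C1_borel_def by (simp add: space_measure_of_conv)

lemma sets_C1_borel: "sets C1_borel = sigma_sets C1_space {U. C1_open U}"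
  unfolding C1_borel_def using C1_open_subset by (simp add: sets_measure_of)

lemma C1_open_in_sets: "C1_open U \<Longrightarrow> U \<in> sets C1_borel"
  unfolding sets_C1_borel by (rule sigma_sets.Basic) simp

lemma C1_space_on: "f \<in> C1_space \<Longrightarrow> C1_on f"
  unfolding C1_space_def by auto

lemma lipschitz_measurable:
  fixes \<Phi> :: "(real \<Rightarrow> real) \<Rightarrow> real"
  assumes K: "0 \<le> K" and L: "\<And>f g. f \<in> C1_space \<Longrightarrow> g \<in> C1_space \<Longrightarrow> \<bar>\<Phi> f - \<Phi> g\<bar> \<le> K * C1_dist f g"
  shows "\<Phi> \<in> borel_measurable C1_borel"
proof (rule borel_measurableI)
  fix S :: "real set" assume S: "open S"
  have "C1_open (\<Phi> -` S \<inter> C1_space)"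
    unfolding C1_open_def
  proof (intro conjI ballI)
    fix f assume f: "f \<in> \<Phi> -` S \<inter> C1_space"
    have "\<Phi> f \<in> S" using f by simp
    then obtain e where e: "e > 0" "\<forall>y. dist y (\<Phi> f) < e \<longrightarrow> y \<in> S"
      using S unfolding open_dist by blast
    show "\<exists>e>0. \<forall>g\<in>C1_space. C1_dist f g < e \<longrightarrow> g \<in> \<Phi> -` S \<inter> C1_space"
    proof (intro exI[of _ "e / (K+1)"] conjI ballI impI)
      show "e / (K+1) > 0" using e K by simp
      fix g assume g: "g \<in> C1_space" "C1_dist f g < e / (K+1)"
      have "\<bar>\<Phi> g - \<Phi> f\<bar> \<le> K * C1_dist f g" using L[OF g(1), of f] f by (simp add: C1_dist_sym)
      also have "\<dots> \<le> K * (e / (K+1))" using g(2) K by (intro mult_left_mono) auto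
      also have "\<dots> < e" using K e by (simp add: field_simps)
      finally have "dist (\<Phi> g) (\<Phi> f) < e" by (simp add: dist_real_def)
      then show "g \<in> \<Phi> -` S \<inter> C1_space" using e g by auto
    qed
  qed auto
  then show "\<Phi> -` S \<inter> space C1_borel \<in> sets C1_borel"
    using C1_open_in_sets space_C1_borel by simp
qed

lemma ev_measurable: assumes "t \<in> {0..1}" shows "(\<lambda>f. f t) \<in> borel_measurable C1_borel"
proof (rule lipschitz_measurable[of 1])
  fix f g assume "f \<in> C1_space" "g \<in> C1_space"
  with assms show "\<bar>f t - g t\<bar> \<le> 1 * C1_dist f g" using C1_dist_ev[of f g t] C1_space_on by simp
qed simp

lemma evd_measurable: assumes "t \<in> {0..1}" shows "(\<lambda>f. C1_deriv f t) \<in> borel_measurable C1_borel"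
proof (rule lipschitz_measurable[of 1])
  fix f g assume "f \<in> C1_space" "g \<in> C1_space"
  with assms show "\<bar>C1_deriv f t - C1_deriv g t\<bar> \<le> 1 * C1_dist f g" using C1_dist_ev_deriv[of f g t] C1_space_on by simp
qed simp




lemma deriv_at_interior:
  assumes "(f has_real_derivative D) (at z within {0..1})" "0 < z" "z < 1"
  shows "(f has_real_derivative D) (at z)"
  using assms at_within_Icc_at[of 0 z 1] by simp

lemma incr_by_deriv_pos:
  fixes f :: "real \<Rightarrow> real"
  assumes d: "\<forall>t\<in>{0..1}. (f has_real_derivative f' t) (at t within {0..1})"
    and pos: "\<forall>t\<in>{0..1}. f' t > 0" and xy: "0 \<le> x" "x < y" "y \<le> 1"
  shows "f x < f y"
proof (rule DERIV_pos_imp_increasing_open[OF xy(2)])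
  fix z assume z: "x < z" "z < y"
  then have "(f has_real_derivative f' z) (at z)" using d xy by (intro deriv_at_interior) auto
  then show "\<exists>D. (f has_real_derivative D) (at z) \<and> 0 < D" using pos z xy by auto
next
  have "continuous_on {0..1} f" by (rule DERIV_continuous_on) (use d in auto)
  then show "continuous_on {x..y} f" by (rule continuous_on_subset) (use xy in auto)
qed

lemma nondecr_by_deriv_nonneg:
  fixes f :: "real \<Rightarrow> real"
  assumes d: "\<forall>t\<in>{0..1}. (f has_real_derivative f' t) (at t within {0..1})"
    and pos: "\<forall>t\<in>{0..1}. f' t \<ge> 0" and xy: "0 \<le> x" "x \<le> y" "y \<le> 1"
  shows "f x \<le> f y"
proof (rule DERIV_nonneg_imp_increasing_open[OF xy(2)])
  fix z assume z: "x < z" "z < y"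
  then have "(f has_real_derivative f' z) (at z)" using d xy by (intro deriv_at_interior) auto
  then show "\<exists>D. (f has_real_derivative D) (at z) \<and> 0 \<le> D" using pos z xy by auto
next
  have "continuous_on {0..1} f" by (rule DERIV_continuous_on) (use d in auto)
  then show "continuous_on {x..y} f" by (rule continuous_on_subset) (use xy in auto)
qed

lemma deriv_zero_if_const:
  fixes f :: "real \<Rightarrow> real"
  assumes d: "(f has_real_derivative D) (at z)" and c: "\<And>w. w \<in> {x<..<y} \<Longrightarrow> f w = c"
    and z: "x < z" "z < y"
  shows "D = 0"
proof -
  have "((\<lambda>w. c) has_real_derivative 0) (at z)" by simp
  then have "(f has_real_derivative 0) (at z)"
    unfolding has_field_derivative_def
    by (rule has_derivative_transform_within_open[of _ _ _ _ "{x<..<y}"]) (use z c in auto)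
  then show ?thesis using DERIV_unique[OF d] by simp
qed

lemma strict_by_deriv_countable:
  fixes f :: "real \<Rightarrow> real"
  assumes d: "\<forall>t\<in>{0..1}. (f has_real_derivative f' t) (at t within {0..1})"
    and pos: "\<forall>t\<in>{0..1}. f' t \<ge> 0" and cnt: "countable {t\<in>{0..1}. f' t = 0}"
    and xy: "0 \<le> x" "x < y" "y \<le> 1"
  shows "f x < f y"
proof (rule ccontr)
  assume "\<not> f x < f y"
  moreover have "f x \<le> f y" using nondecr_by_deriv_nonneg[OF d pos] xy by simp
  ultimately have eq: "f x = f y" by simp
  have c: "f w = f x" if "w \<in> {x<..<y}" for w
  proof -
    have "f x \<le> f w" using nondecr_by_deriv_nonneg[OF d pos, of x w] that xy by simp
    moreover have "f w \<le> f y" using nondecr_by_deriv_nonneg[OF d pos, of w y] that xy by simp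
    ultimately show ?thesis using eq by simp
  qed
  have "{x<..<y} \<subseteq> {t\<in>{0..1}. f' t = 0}"
  proof
    fix z assume z: "z \<in> {x<..<y}"
    then have "(f has_real_derivative f' z) (at z)" using d xy by (intro deriv_at_interior) auto
    then have "f' z = 0" by (rule deriv_zero_if_const[OF _ c]) (use z in auto)
    then show "z \<in> {t\<in>{0..1}. f' t = 0}" using z xy by auto
  qed
  then have "countable {x<..<y}" using cnt countable_subset by blast
  then show False using uncountable_open_interval[of x y] xy by simp
qed

lemma const_deriv_zero:
  fixes f :: "real \<Rightarrow> real"
  assumes d: "\<forall>t\<in>{0..1}. (f has_real_derivative f' t) (at t within {0..1})"
    and c: "\<And>t. t \<in> {0..1} \<Longrightarrow> f t = f 0"
  shows "{0<..<1} \<subseteq> {t\<in>{0..1}. f' t = 0}"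
proof
  fix z :: real assume z: "z \<in> {0<..<1}"
  then have "(f has_real_derivative f' z) (at z)" using d by (intro deriv_at_interior) auto
  have cc: "\<And>w. w \<in> {0<..<1} \<Longrightarrow> f w = f 0"
    by (meson c greaterThanLessThan_iff atLeastAtMost_iff less_imp_le)
  have "f' z = 0" by (rule deriv_zero_if_const[OF \<open>(f has_real_derivative f' z) (at z)\<close> cc]) (use z in auto)
  then show "z \<in> {t\<in>{0..1}. f' t = 0}" using z by auto
qed

lemma nonconst_of_countable:
  fixes f :: "real \<Rightarrow> real"
  assumes d: "\<forall>t\<in>{0..1}. (f has_real_derivative f' t) (at t within {0..1})"
    and cnt: "countable {t\<in>{0..1}. f' t = 0}"
  shows "\<exists>t\<in>{0..1}. f t \<noteq> f 0"
proof (rule ccontr)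
  assume "\<not> ?thesis"
  then have c: "\<And>t. t \<in> {0..1} \<Longrightarrow> f t = f 0" by blast
  have "{0<..<1} \<subseteq> {t\<in>{0..1}. f' t = 0}" by (rule const_deriv_zero[OF d c])
  then have "countable {0<..<1::real}" using cnt countable_subset by blast
  then show False using uncountable_open_interval[of 0 "1::real"] by simp
qed

subsection \<open>Generalised inverse via rationals\<close>

definition Q01 :: "real set" where "Q01 = {q\<in>\<rat>. 0 \<le> q \<and> q \<le> 1}"

lemma countable_Q01: "countable Q01"
  unfolding Q01_def by (rule countable_subset[OF _ countable_rat]) auto

lemma Q01_sub: "Q01 \<subseteq> {0..1}" unfolding Q01_def by auto

lemma zero_Q01: "0 \<in> Q01" unfolding Q01_def by auto

definition tau :: "(real \<Rightarrow> real) \<Rightarrow> real \<Rightarrow> real" where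
  "tau S v = (SUP q\<in>Q01. if S q < v then q else 0)"

lemma tau_bdd: "bdd_above ((\<lambda>q. if S q < v then q else 0) ` Q01)"
  by (rule bdd_aboveI[of _ 1]) (auto simp: Q01_def)

lemma tau_range:
  fixes S :: "real \<Rightarrow> real"
  shows "0 \<le> tau S v \<and> tau S v \<le> 1"
proof
  have ne: "Q01 \<noteq> {}" using zero_Q01 by auto
  show "tau S v \<le> 1" unfolding tau_def
    by (rule cSUP_least[OF ne]) (auto simp: Q01_def)
  have "(if S 0 < v then 0 else 0) \<le> tau S v" unfolding tau_def
    by (rule cSUP_upper[OF zero_Q01 tau_bdd])
  then show "0 \<le> tau S v" by simp
qed

lemma tau_eq:
  fixes S :: "real \<Rightarrow> real"
  assumes sm: "\<And>x y. 0 \<le> x \<Longrightarrow> x < y \<Longrightarrow> y \<le> 1 \<Longrightarrow> S x < S y"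
    and x: "0 \<le> x" "x \<le> 1" and v: "S x = v"
  shows "tau S v = x"
proof (rule antisym)
  have ne: "Q01 \<noteq> {}" using zero_Q01 by auto
  show "tau S v \<le> x" unfolding tau_def
  proof (rule cSUP_least[OF ne])
    fix q assume q: "q \<in> Q01"
    show "(if S q < v then q else 0) \<le> x"
    proof (cases "S q < v")
      case True
      have "q < x"
      proof (rule ccontr)
        assume "\<not> q < x"
        then have "x = q \<or> x < q" by auto
        then show False using sm[of x q] q x v True by (auto simp: Q01_def)
      qed
      then show ?thesis using True by simp
    qed (use x in simp)
  qed
  show "x \<le> tau S v"
  proof (rule dense_le)
    fix y assume y: "y < x"
    show "y \<le> tau S v"
    proof (cases "y < 0")
      case True then show ?thesis using tau_range[of S v] by simp
    next
      case False
    obtain q where q: "q \<in> \<rat>" "max y 0 < q" "q < x" using Rats_dense_in_real[of "max y 0" x] y x False by auto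
    then have qQ: "q \<in> Q01" using x unfolding Q01_def by auto
    have "S q < v" using sm[of q x] q x v by auto
    then have "q \<le> tau S v" unfolding tau_def
      using cSUP_upper[OF qQ tau_bdd, of S v] by simp
    then show "y \<le> tau S v" using q by simp
    qed
  qed
qed

lemma tau_measurable:
  assumes "\<And>q. q \<in> Q01 \<Longrightarrow> (\<lambda>g. S g q) \<in> borel_measurable M"
  shows "(\<lambda>g. tau (S g) v) \<in> borel_measurable M"
  unfolding tau_def
proof (rule borel_measurable_cSUP[OF countable_Q01])
  fix q assume "q \<in> Q01"
  then have [measurable]: "(\<lambda>g. S g q) \<in> borel_measurable M" by (rule assms)
  show "(\<lambda>g. if S g q < v then q else 0) \<in> borel_measurable M" by measurable
qed (rule tau_bdd)


subsection \<open>Arc-length type functional\<close>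

definition V :: "(real \<Rightarrow> real) \<Rightarrow> real \<Rightarrow> real" where
  "V g t = integral {0..t} (\<lambda>x. \<bar>C1_deriv g x\<bar>)"

definition sf :: "(real \<Rightarrow> real) \<Rightarrow> real \<Rightarrow> real" where
  "sf g t = V g t / V g 1"

lemma V_fun: "V g = (\<lambda>t. integral {0..t} (\<lambda>x. \<bar>C1_deriv g x\<bar>))"
  by (rule ext) (simp add: V_def)

lemma V_deriv:
  assumes "C1_on g" "t \<in> {0..1}"
  shows "(V g has_real_derivative \<bar>C1_deriv g t\<bar>) (at t within {0..1})"
proof -
  have c: "continuous_on {0..1} (\<lambda>x. \<bar>C1_deriv g x\<bar>)"
    by (rule continuous_on_rabs[OF C1_on_cont_deriv[OF assms(1)]])
  show ?thesis unfolding V_fun by (rule integral_has_real_derivative[OF c assms(2)])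
qed

lemma V_0: "V g 0 = 0"
  by (simp add: V_def)

lemma V_lip:
  assumes f: "C1_on f" and g: "C1_on g" and t: "t \<in> {0..1}"
  shows "\<bar>V f t - V g t\<bar> \<le> C1_dist f g"
proof -
  have cf: "continuous_on {0..t} (\<lambda>x. \<bar>C1_deriv f x\<bar>)"
    by (rule continuous_on_subset[OF continuous_on_rabs[OF C1_on_cont_deriv[OF f]]]) (use t in auto)
  have cg: "continuous_on {0..t} (\<lambda>x. \<bar>C1_deriv g x\<bar>)"
    by (rule continuous_on_subset[OF continuous_on_rabs[OF C1_on_cont_deriv[OF g]]]) (use t in auto)
  have i1: "(\<lambda>x. \<bar>C1_deriv f x\<bar>) integrable_on {0..t}" using cf by (rule integrable_continuous_interval)
  have i2: "(\<lambda>x. \<bar>C1_deriv g x\<bar>) integrable_on {0..t}" using cg by (rule integrable_continuous_interval)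
  have "V f t - V g t = integral {0..t} (\<lambda>x. \<bar>C1_deriv f x\<bar> - \<bar>C1_deriv g x\<bar>)"
    unfolding V_def by (rule integral_diff[OF i1 i2, symmetric])
  also have "\<bar>\<dots>\<bar> \<le> integral {0..t} (\<lambda>x. C1_dist f g)"
  proof -
    have "norm (integral {0..t} (\<lambda>x. \<bar>C1_deriv f x\<bar> - \<bar>C1_deriv g x\<bar>)) \<le> integral {0..t} (\<lambda>x. C1_dist f g)"
    proof (rule integral_norm_bound_integral)
      show "(\<lambda>x. \<bar>C1_deriv f x\<bar> - \<bar>C1_deriv g x\<bar>) integrable_on {0..t}" using i1 i2 by (rule integrable_diff)
      show "(\<lambda>x. C1_dist f g) integrable_on {0..t}" by (rule integrable_const_ivl)
      fix x assume x: "x \<in> {0..t}"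
      then have xI: "x \<in> {0..1}" using t by auto
      have "\<bar>\<bar>C1_deriv f x\<bar> - \<bar>C1_deriv g x\<bar>\<bar> \<le> \<bar>C1_deriv f x - C1_deriv g x\<bar>" by (rule abs_triangle_ineq3)
      also have "\<dots> \<le> C1_dist f g" by (rule C1_dist_ev_deriv[OF f g xI])
      finally show "norm (\<bar>C1_deriv f x\<bar> - \<bar>C1_deriv g x\<bar>) \<le> C1_dist f g" by simp
    qed
    then show ?thesis by simp
  qed
  also have "\<dots> = t * C1_dist f g" using t by simp
  also have "\<dots> \<le> C1_dist f g" using t C1_dist_nonneg[OF f g] by (simp add: mult_left_le_one_le)
  finally show ?thesis .
qed

lemma V_measurable:
  assumes t: "t \<in> {0..1}" shows "(\<lambda>g. V g t) \<in> borel_measurable C1_borel"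
proof (rule lipschitz_measurable[of 1])
  fix f g assume "f \<in> C1_space" "g \<in> C1_space"
  then show "\<bar>V f t - V g t\<bar> \<le> 1 * C1_dist f g" using V_lip[OF _ _ t] C1_space_on by simp
qed simp

lemma sf_measurable:
  assumes t: "t \<in> {0..1}" shows "(\<lambda>g. sf g t) \<in> borel_measurable C1_borel"
proof -
  have [measurable]: "(\<lambda>g. V g t) \<in> borel_measurable C1_borel" by (rule V_measurable[OF t])
  have [measurable]: "(\<lambda>g. V g 1) \<in> borel_measurable C1_borel" by (rule V_measurable) simp
  show ?thesis unfolding sf_def by measurable
qed

lemma tau_sf_measurable: "(\<lambda>g. tau (sf g) v) \<in> borel_measurable C1_borel"
  by (rule tau_measurable) (rule sf_measurable, use Q01_sub in auto)


lemma xi_V_strict: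
  assumes xi: "C1_on \<xi>" and cnt: "countable {t\<in>{0..1}. C1_deriv \<xi> t = 0}"
    and xy: "0 \<le> x" "x < y" "y \<le> 1"
  shows "V \<xi> x < V \<xi> y"
proof (rule strict_by_deriv_countable[of "V \<xi>" "\<lambda>t. \<bar>C1_deriv \<xi> t\<bar>"])
  show "\<forall>t\<in>{0..1}. (V \<xi> has_real_derivative \<bar>C1_deriv \<xi> t\<bar>) (at t within {0..1})"
    using V_deriv[OF xi] by blast
  show "countable {t \<in> {0..1}. \<bar>C1_deriv \<xi> t\<bar> = 0}" using cnt by simp
qed (use xy in auto)

lemma xi_V1_pos:
  assumes xi: "C1_on \<xi>" and cnt: "countable {t\<in>{0..1}. C1_deriv \<xi> t = 0}"
  shows "V \<xi> 1 > 0"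
  using xi_V_strict[OF xi cnt, of 0 1] by (simp add: V_0)

definition sx :: "(real \<Rightarrow> real) \<Rightarrow> real \<Rightarrow> real" where
  "sx \<xi> t = V \<xi> t / V \<xi> 1"

lemma sx_strict:
  assumes xi: "C1_on \<xi>" and cnt: "countable {t\<in>{0..1}. C1_deriv \<xi> t = 0}"
    and xy: "0 \<le> x" "x < y" "y \<le> 1"
  shows "sx \<xi> x < sx \<xi> y"
  using xi_V_strict[OF xi cnt xy] xi_V1_pos[OF xi cnt] unfolding sx_def by (simp add: divide_strict_right_mono)

lemma sx_mono:
  assumes xi: "C1_on \<xi>" and cnt: "countable {t\<in>{0..1}. C1_deriv \<xi> t = 0}"
    and xy: "0 \<le> x" "x \<le> y" "y \<le> 1"
  shows "sx \<xi> x \<le> sx \<xi> y"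
  using sx_strict[OF xi cnt, of x y] xy by (cases "x = y") auto

lemma sx_0: "sx \<xi> 0 = 0" by (simp add: sx_def V_0)

lemma sx_1:
  assumes xi: "C1_on \<xi>" and cnt: "countable {t\<in>{0..1}. C1_deriv \<xi> t = 0}"
  shows "sx \<xi> 1 = 1"
  using xi_V1_pos[OF xi cnt] by (simp add: sx_def)

lemma sx_cont:
  assumes xi: "C1_on \<xi>"
  shows "continuous_on {0..1} (sx \<xi>)"
proof -
  have "continuous_on {0..1} (V \<xi>)" by (rule DERIV_continuous_on) (rule V_deriv[OF xi])
  then have "continuous_on {0..1} (\<lambda>t. inverse (V \<xi> 1) * V \<xi> t)" by (intro continuous_intros)
  moreover have "(\<lambda>t. inverse (V \<xi> 1) * V \<xi> t) = sx \<xi>" by (rule ext) (simp add: sx_def divide_inverse mult.commute)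
  ultimately show ?thesis by metis
qed

lemma sx_range:
  assumes xi: "C1_on \<xi>" and cnt: "countable {t\<in>{0..1}. C1_deriv \<xi> t = 0}"
    and x: "x \<in> {0..1}"
  shows "sx \<xi> x \<in> {0..1}"
  using sx_mono[OF xi cnt, of 0 x] sx_mono[OF xi cnt, of x 1] x sx_0 sx_1[OF xi cnt] by auto

lemma tau_sx:
  assumes xi: "C1_on \<xi>" and cnt: "countable {t\<in>{0..1}. C1_deriv \<xi> t = 0}"
    and v: "v \<in> {0..1}"
  shows "tau (sx \<xi>) v \<in> {0..1}" "sx \<xi> (tau (sx \<xi>) v) = v"
proof -
  obtain x where x: "0 \<le> x" "x \<le> 1" "sx \<xi> x = v"
    using IVT'[of "sx \<xi>" 0 v 1] v sx_0 sx_1[OF xi cnt] sx_cont[OF xi] by auto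
  have "tau (sx \<xi>) v = x"
    by (rule tau_eq) (use sx_strict[OF xi cnt] x in auto)
  then show "tau (sx \<xi>) v \<in> {0..1}" "sx \<xi> (tau (sx \<xi>) v) = v" using x by auto
qed

lemma tau_sx_sx:
  assumes xi: "C1_on \<xi>" and cnt: "countable {t\<in>{0..1}. C1_deriv \<xi> t = 0}"
    and x: "x \<in> {0..1}"
  shows "tau (sx \<xi>) (sx \<xi> x) = x"
  by (rule tau_eq) (use sx_strict[OF xi cnt] x in auto)

locale warp =
  fixes h :: "real \<Rightarrow> real"
  assumes hC: "C1_on h" and hpos: "\<forall>t\<in>{0..1}. C1_deriv h t > 0" and h0: "h 0 = 0" and h1: "h 1 = 1"
begin

lemma strict: "0 \<le> x \<Longrightarrow> x < y \<Longrightarrow> y \<le> 1 \<Longrightarrow> h x < h y"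
  by (rule incr_by_deriv_pos[of h "C1_deriv h"]) (use C1_onD[OF hC] hpos in auto)

lemma mono: "0 \<le> x \<Longrightarrow> x \<le> y \<Longrightarrow> y \<le> 1 \<Longrightarrow> h x \<le> h y"
  using strict[of x y] by (cases "x = y") auto

lemma range: "x \<in> {0..1} \<Longrightarrow> h x \<in> {0..1}"
  using mono[of 0 x] mono[of x 1] h0 h1 by auto

lemma image_sub: "h ` {0..1} \<subseteq> {0..1}" using range by auto

lemma inj: "inj_on h {0..1}"
proof (rule inj_onI)
  fix x y assume xy: "x \<in> {0..1}" "y \<in> {0..1}" "h x = h y"
  show "x = y"
  proof (rule ccontr)
    assume "x \<noteq> y"
    then have "x < y \<or> y < x" by auto
    then show False using strict[of x y] strict[of y x] xy by auto
  qed
qed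

lemma surj: "y \<in> {0..1} \<Longrightarrow> y \<in> h ` {0..1}"
  using IVT'[of h 0 y 1] h0 h1 C1_on_cont[OF hC] by force

lemma inv_props:
  assumes y: "y \<in> {0..1}"
  shows "inv_into {0..1} h y \<in> {0..1}" "h (inv_into {0..1} h y) = y"
  by (rule inv_into_into[OF surj[OF y]]) (rule f_inv_into_f[OF surj[OF y]])

lemma inv_h: "x \<in> {0..1} \<Longrightarrow> inv_into {0..1} h (h x) = x"
  by (rule inv_into_f_f[OF inj])

end


locale model = warp h for h +
  fixes \<xi> :: "real \<Rightarrow> real" and a b :: real
  assumes xi: "C1_on \<xi>" and cnt: "countable {t\<in>{0..1}. C1_deriv \<xi> t = 0}" and bnz: "b \<noteq> 0"
begin

abbreviation "G0 \<equiv> (\<lambda>t. a + b * \<xi> (h t))"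
abbreviation "gt \<equiv> restrict (\<lambda>t. a + b * \<xi> (h t)) {0..1}"

lemma G0_deriv:
  assumes t: "t \<in> {0..1}"
  shows "(G0 has_real_derivative b * (C1_deriv \<xi> (h t) * C1_deriv h t)) (at t within {0..1})"
proof -
  have "(\<xi> \<circ> h has_real_derivative C1_deriv \<xi> (h t) * C1_deriv h t) (at t within {0..1})"
    by (rule DERIV_image_chain[OF DERIV_subset[OF C1_onD[OF xi range[OF t]] image_sub] C1_onD[OF hC t]])
  then have "((\<lambda>x. b * (\<xi> \<circ> h) x) has_real_derivative b * (C1_deriv \<xi> (h t) * C1_deriv h t)) (at t within {0..1})"
    by (rule DERIV_cmult)
  then have "((\<lambda>x. a + b * (\<xi> \<circ> h) x) has_real_derivative 0 + b * (C1_deriv \<xi> (h t) * C1_deriv h t)) (at t within {0..1})"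
    by (rule DERIV_add[OF DERIV_const])
  then show ?thesis by (simp add: o_def)
qed

lemma gt_deriv:
  assumes t: "t \<in> {0..1}"
  shows "(gt has_real_derivative b * (C1_deriv \<xi> (h t) * C1_deriv h t)) (at t within {0..1})"
  by (rule real_deriv_transform[OF G0_deriv[OF t] t]) simp

lemma gt_dcont: "continuous_on {0..1} (\<lambda>t. b * (C1_deriv \<xi> (h t) * C1_deriv h t))"
proof -
  have "continuous_on {0..1} (\<lambda>t. C1_deriv \<xi> (h t))"
    by (rule continuous_on_compose2[OF C1_on_cont_deriv[OF xi] C1_on_cont[OF hC] image_sub])
  then show ?thesis using C1_on_cont_deriv[OF hC] by (intro continuous_intros)
qed

lemma gt_C1: "C1_on gt"
  using C1_onI(1)[OF gt_dcont] gt_deriv by blast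

lemma gt_C1_deriv: "t \<in> {0..1} \<Longrightarrow> C1_deriv gt t = b * (C1_deriv \<xi> (h t) * C1_deriv h t)"
  using C1_onI(2)[OF gt_dcont] gt_deriv by blast

lemma gt_space: "gt \<in> C1_space"
  using gt_C1 unfolding C1_space_def by auto

lemma V_gt:
  assumes t: "t \<in> {0..1}"
  shows "V gt t = \<bar>b\<bar> * V \<xi> (h t)"
proof -
  define W where "W = (\<lambda>x. \<bar>b\<bar> * V \<xi> (h x))"
  have dW: "(W has_real_derivative \<bar>C1_deriv gt x\<bar>) (at x within {0..1})" if x: "x \<in> {0..1}" for x
  proof -
    have "(V \<xi> \<circ> h has_real_derivative \<bar>C1_deriv \<xi> (h x)\<bar> * C1_deriv h x) (at x within {0..1})"
      by (rule DERIV_image_chain[OF DERIV_subset[OF V_deriv[OF xi range[OF x]] image_sub] C1_onD[OF hC x]])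
    then have "((\<lambda>y. \<bar>b\<bar> * (V \<xi> \<circ> h) y) has_real_derivative \<bar>b\<bar> * (\<bar>C1_deriv \<xi> (h x)\<bar> * C1_deriv h x)) (at x within {0..1})"
      by (rule DERIV_cmult)
    moreover have "\<bar>C1_deriv gt x\<bar> = \<bar>b\<bar> * (\<bar>C1_deriv \<xi> (h x)\<bar> * C1_deriv h x)"
    proof -
      have "C1_deriv h x > 0" using hpos x by blast
      then show ?thesis using gt_C1_deriv[OF x] by (simp add: abs_mult)
    qed
    ultimately show ?thesis unfolding W_def by (simp add: o_def)
  qed
  have "((\<lambda>x. \<bar>C1_deriv gt x\<bar>) has_integral W t - W 0) {0..t}"
  proof (rule fundamental_theorem_of_calculus)
    show "0 \<le> t" using t by simp
    fix x assume x: "x \<in> {0..t}"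
    then have xI: "x \<in> {0..1}" using t by auto
    have "(W has_vector_derivative \<bar>C1_deriv gt x\<bar>) (at x within {0..1})"
      using dW[OF xI] by (simp add: has_real_derivative_iff_has_vector_derivative)
    then show "(W has_vector_derivative \<bar>C1_deriv gt x\<bar>) (at x within {0..t})"
      by (rule has_vector_derivative_within_subset) (use t in auto)
  qed
  moreover have "W 0 = 0" unfolding W_def using h0 by (simp add: V_0)
  ultimately have "integral {0..t} (\<lambda>x. \<bar>C1_deriv gt x\<bar>) = W t" by (simp add: integral_unique)
  then show ?thesis unfolding V_def W_def by simp
qed

lemma sf_gt:
  assumes t: "t \<in> {0..1}"
  shows "sf gt t = sx \<xi> (h t)"
  unfolding sf_def sx_def using V_gt[OF t] V_gt[of 1] h1 bnz by simp

lemma sf_gt_strict: "0 \<le> x \<Longrightarrow> x < y \<Longrightarrow> y \<le> 1 \<Longrightarrow> sf gt x < sf gt y"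
  using sf_gt[of x] sf_gt[of y] strict[of x y] range[of x] range[of y]
    sx_strict[OF xi cnt, of "h x" "h y"] by auto

lemma tau_gt:
  assumes v: "v \<in> {0..1}"
  shows "tau (sf gt) v = inv_into {0..1} h (tau (sx \<xi>) v)"
proof -
  define x where "x = inv_into {0..1} h (tau (sx \<xi>) v)"
  have x: "x \<in> {0..1}" "h x = tau (sx \<xi>) v"
    unfolding x_def using inv_props tau_sx(1)[OF xi cnt v] by auto
  have "sf gt x = v" using sf_gt[OF x(1)] x(2) tau_sx(2)[OF xi cnt v] by simp
  then have "tau (sf gt) v = x" by (intro tau_eq) (use sf_gt_strict x in auto)
  then show ?thesis unfolding x_def .
qed

lemma gt_tau:
  assumes v: "v \<in> {0..1}"
  shows "gt (tau (sf gt) v) = a + b * \<xi> (tau (sx \<xi>) v)"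
proof -
  have x: "inv_into {0..1} h (tau (sx \<xi>) v) \<in> {0..1}" "h (inv_into {0..1} h (tau (sx \<xi>) v)) = tau (sx \<xi>) v"
    using inv_props tau_sx(1)[OF xi cnt v] by auto
  show ?thesis unfolding tau_gt[OF v] using x by simp
qed

lemma h_rec:
  assumes t: "t \<in> {0..1}"
  shows "tau (sx \<xi>) (sf gt t) = h t"
  unfolding sf_gt[OF t] by (rule tau_sx_sx[OF xi cnt range[OF t]])

end




lemma floor_approx:
  fixes x :: real
  assumes x: "0 \<le> x" "x \<le> 1"
  shows "(\<lambda>n. real (nat \<lfloor>real (Suc n) * x\<rfloor>) / real (Suc n)) \<longlonglongrightarrow> x"
proof (rule tendsto_sandwich[of "\<lambda>n. x - inverse (real (Suc n))" _ _ "\<lambda>n. x"])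
  show "\<forall>\<^sub>F n in sequentially. x - inverse (real (Suc n)) \<le> real (nat \<lfloor>real (Suc n) * x\<rfloor>) / real (Suc n)"
  proof (rule always_eventually, rule allI)
    fix n
    have fl: "real_of_int \<lfloor>real (Suc n) * x\<rfloor> > real (Suc n) * x - 1" by linarith
    have nn: "0 \<le> \<lfloor>real (Suc n) * x\<rfloor>" using x by simp
    then have "real (nat \<lfloor>real (Suc n) * x\<rfloor>) = real_of_int \<lfloor>real (Suc n) * x\<rfloor>" by simp
    then have "real (nat \<lfloor>real (Suc n) * x\<rfloor>) / real (Suc n) \<ge> (real (Suc n) * x - 1) / real (Suc n)"
      using fl by (intro divide_right_mono) auto
    moreover have "(real (Suc n) * x - 1) / real (Suc n) = x - inverse (real (Suc n))"
      by (simp add: field_simps)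
    ultimately show "x - inverse (real (Suc n)) \<le> real (nat \<lfloor>real (Suc n) * x\<rfloor>) / real (Suc n)" by simp
  qed
  show "\<forall>\<^sub>F n in sequentially. real (nat \<lfloor>real (Suc n) * x\<rfloor>) / real (Suc n) \<le> x"
  proof (rule always_eventually, rule allI)
    fix n
    have nn: "0 \<le> \<lfloor>real (Suc n) * x\<rfloor>" using x by simp
    then have "real (nat \<lfloor>real (Suc n) * x\<rfloor>) = real_of_int \<lfloor>real (Suc n) * x\<rfloor>" by simp
    also have "\<dots> \<le> real (Suc n) * x" by linarith
    finally show "real (nat \<lfloor>real (Suc n) * x\<rfloor>) / real (Suc n) \<le> x"
      by (simp add: divide_le_eq mult.commute)
  qed
  have "(\<lambda>n. x - inverse (real (Suc n))) \<longlonglongrightarrow> x - 0"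
    by (intro tendsto_diff tendsto_const LIMSEQ_inverse_real_of_nat)
  then show "(\<lambda>n. x - inverse (real (Suc n))) \<longlonglongrightarrow> x" by simp
qed simp

lemma floor_approx_range:
  fixes x :: real
  assumes x: "0 \<le> x" "x \<le> 1"
  shows "nat \<lfloor>real (Suc n) * x\<rfloor> \<le> Suc n"
proof -
  have "\<lfloor>real (Suc n) * x\<rfloor> \<le> \<lfloor>real (Suc n)\<rfloor>"
    using x by (intro floor_mono) (simp add: mult_left_le_one_le)
  then show ?thesis by simp
qed

lemma comp_measurable:
  assumes X[measurable]: "X \<in> borel_measurable C1_borel"
    and Xr: "\<And>g. g \<in> C1_space \<Longrightarrow> X g \<in> {0..1}"
  shows "(\<lambda>g. g (X g)) \<in> borel_measurable C1_borel"
proof (rule borel_measurable_LIMSEQ_real)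
  define u where "u n g = (\<Sum>k\<le>Suc n. if nat \<lfloor>real (Suc n) * X g\<rfloor> = k then g (real k / real (Suc n)) else 0)" for n g
  show "u n \<in> borel_measurable C1_borel" for n
  proof -
    have [measurable]: "(\<lambda>g. g (real k / real (Suc n))) \<in> borel_measurable C1_borel" if "k \<le> Suc n" for k
      by (rule ev_measurable) (use that in auto)
    show ?thesis unfolding u_def
      by (intro borel_measurable_sum) measurable
  qed
  fix g assume g: "g \<in> space C1_borel"
  then have gs: "g \<in> C1_space" by (simp add: space_C1_borel)
  have x: "0 \<le> X g" "X g \<le> 1" using Xr[OF gs] by auto
  have ueq: "u n g = g (real (nat \<lfloor>real (Suc n) * X g\<rfloor>) / real (Suc n))" for n
    unfolding u_def using floor_approx_range[OF x, of n] by (simp add: sum.delta')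
  have "(\<lambda>n. g (real (nat \<lfloor>real (Suc n) * X g\<rfloor>) / real (Suc n))) \<longlonglongrightarrow> g (X g)"
  proof (rule continuous_on_tendsto_compose[OF C1_on_cont[OF C1_space_on[OF gs]] floor_approx[OF x]])
    show "X g \<in> {0..1}" using x by simp
    show "\<forall>\<^sub>F n in sequentially. real (nat \<lfloor>real (Suc n) * X g\<rfloor>) / real (Suc n) \<in> {0..1}"
    proof (rule always_eventually, rule allI)
      fix n
      have "real (nat \<lfloor>real (Suc n) * X g\<rfloor>) \<le> real (Suc n)"
        using floor_approx_range[OF x, of n] by linarith
      then show "real (nat \<lfloor>real (Suc n) * X g\<rfloor>) / real (Suc n) \<in> {0..1}" by simp
    qed
  qed
  then show "(\<lambda>n. u n g) \<longlonglongrightarrow> g (X g)" unfolding ueq .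
qed


lemma rat_near:
  assumes t: "t \<in> {0..1}" and d: "d > 0"
  shows "\<exists>q\<in>Q01. \<bar>q - t\<bar> < d"
proof (cases "t = 0")
  case True then show ?thesis using zero_Q01 d by (intro bexI[of _ 0]) auto
next
  case False
  then have tp: "t > 0" using t by auto
  obtain q where q: "q \<in> \<rat>" "max 0 (t - d) < q" "q < t" using Rats_dense_in_real[of "max 0 (t - d)" t] tp d by auto
  then have "q \<in> Q01" using t unfolding Q01_def by auto
  then show ?thesis using q by (intro bexI[of _ q]) auto
qed

lemma supn_Q01:
  fixes u :: "real \<Rightarrow> real"
  assumes c: "continuous_on {0..1} u"
  shows "supn u = (SUP t\<in>Q01. \<bar>u t\<bar>)"
proof (rule antisym)
  have ne: "Q01 \<noteq> {}" using zero_Q01 by auto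
  have bdd: "bdd_above ((\<lambda>t. \<bar>u t\<bar>) ` Q01)"
    by (rule bdd_above_mono[OF supn_bdd[OF c]]) (use Q01_sub in auto)
  show "(SUP t\<in>Q01. \<bar>u t\<bar>) \<le> supn u"
    by (rule cSUP_least[OF ne]) (rule supn_upper[OF c], use Q01_sub in auto)
  show "supn u \<le> (SUP t\<in>Q01. \<bar>u t\<bar>)"
  proof (rule supn_least)
    fix t :: real assume t: "t \<in> {0..1}"
    show "\<bar>u t\<bar> \<le> (SUP t\<in>Q01. \<bar>u t\<bar>)"
    proof (rule ccontr)
      assume "\<not> ?thesis"
      then have gap: "\<bar>u t\<bar> - (SUP t\<in>Q01. \<bar>u t\<bar>) > 0" by simp
      obtain d where d: "d > 0" "\<forall>x'\<in>{0..1}. dist x' t < d \<longrightarrow> dist (u x') (u t) < \<bar>u t\<bar> - (SUP t\<in>Q01. \<bar>u t\<bar>)"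
        using c t gap unfolding continuous_on_iff by blast
      obtain q where q: "q \<in> Q01" "\<bar>q - t\<bar> < d" using rat_near[OF t d(1)] by blast
      have "dist (u q) (u t) < \<bar>u t\<bar> - (SUP t\<in>Q01. \<bar>u t\<bar>)"
        using d(2) q Q01_sub by (auto simp: dist_real_def)
      then have "\<bar>u q\<bar> > (SUP t\<in>Q01. \<bar>u t\<bar>)" by (simp add: dist_real_def)
      moreover have "\<bar>u q\<bar> \<le> (SUP t\<in>Q01. \<bar>u t\<bar>)" by (rule cSUP_upper[OF q(1) bdd])
      ultimately show False by simp
    qed
  qed
qed

lemma diffquot_tendsto:
  assumes g: "C1_on g" and t: "t \<in> {0..1}"
    and s: "\<And>n. s n \<in> {0..1}" "\<And>n. s n \<noteq> t" "s \<longlonglongrightarrow> t"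
  shows "(\<lambda>n. (g (s n) - g t) / (s n - t)) \<longlonglongrightarrow> C1_deriv g t"
proof -
  have "((\<lambda>y. (g y - g t) / (y - t)) \<longlongrightarrow> C1_deriv g t) (at t within {0..1})"
    using C1_onD[OF g t] unfolding has_field_derivative_iff .
  moreover have "filterlim s (at t within {0..1}) sequentially"
    unfolding filterlim_at using s by auto
  ultimately show ?thesis by (rule filterlim_compose)
qed

definition sq :: "real \<Rightarrow> nat \<Rightarrow> real" where
  "sq t n = (if t \<le> 1/2 then t + 1 / real (n + 2) else t - 1 / real (n + 2))"

lemma sq_props:
  assumes t: "t \<in> {0..1}"
  shows "sq t n \<in> {0..1}" "sq t n \<noteq> t" "sq t \<longlonglongrightarrow> t"
proof -
  have i: "1 / real (n + 2) \<le> 1/2" by (simp add: field_simps)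
  have p: "1 / real (n + 2) > 0" by simp
  have t01: "0 \<le> t" "t \<le> 1" using t by auto
  show "sq t n \<in> {0..1}"
  proof (cases "t \<le> 1/2")
    case True
    have "0 \<le> t + 1 / real (n + 2)" "t + 1 / real (n + 2) \<le> 1" using True t01 i p by linarith+
    then show ?thesis using True unfolding sq_def by simp
  next
    case False
    have "0 \<le> t - 1 / real (n + 2)" "t - 1 / real (n + 2) \<le> 1" using False t01 i p by linarith+
    then show ?thesis using False unfolding sq_def by simp
  qed
  show "sq t n \<noteq> t" using p unfolding sq_def by auto
  have l: "(\<lambda>n. 1 / real (n + 2)) \<longlonglongrightarrow> 0"
  proof -
    have "(\<lambda>n. inverse (real (Suc (Suc n)))) \<longlonglongrightarrow> 0"
      using LIMSEQ_inverse_real_of_nat by (rule LIMSEQ_Suc)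
    then show ?thesis by (simp add: divide_inverse add.commute)
  qed
  show "sq t \<longlonglongrightarrow> t"
  proof (cases "t \<le> 1/2")
    case True
    have "(\<lambda>n. t + 1 / real (n + 2)) \<longlonglongrightarrow> t + 0" by (intro tendsto_add tendsto_const l)
    then show ?thesis using True unfolding sq_def[abs_def] by simp
  next
    case False
    have "(\<lambda>n. t - 1 / real (n + 2)) \<longlonglongrightarrow> t - 0" by (intro tendsto_diff tendsto_const l)
    then show ?thesis using False unfolding sq_def[abs_def] by simp
  qed
qed


subsection \<open>Cylinder sigma algebra\<close>

definition cyl :: "(real \<times> real) list \<Rightarrow> (real \<Rightarrow> real) set" where
  "cyl ps = {g\<in>C1_space. \<forall>p\<in>set ps. g (fst p) \<le> snd p}"

definition Cyl :: "(real \<Rightarrow> real) set set" where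
  "Cyl = {cyl ps | ps. \<forall>p\<in>set ps. fst p \<in> {0..1}}"

definition MC :: "(real \<Rightarrow> real) measure" where
  "MC = sigma C1_space Cyl"

lemma Cyl_sub: "Cyl \<subseteq> Pow C1_space"
  unfolding Cyl_def cyl_def by auto

lemma space_MC: "space MC = C1_space"
  unfolding MC_def by (simp add: space_measure_of_conv)

lemma sets_MC: "sets MC = sigma_sets C1_space Cyl"
  unfolding MC_def using Cyl_sub by (simp add: sets_measure_of)

lemma ev_MC: assumes t: "t \<in> {0..1}" shows "(\<lambda>g. g t) \<in> borel_measurable MC"
proof (rule borel_measurableI_le)
  fix c
  have "{g \<in> space MC. g t \<le> c} = cyl [(t, c)]" unfolding cyl_def space_MC by auto
  moreover have "cyl [(t, c)] \<in> Cyl" unfolding Cyl_def using t by auto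
  ultimately show "{g \<in> space MC. g t \<le> c} \<in> sets MC" unfolding sets_MC by auto
qed

lemma evd_MC: assumes t: "t \<in> {0..1}" shows "(\<lambda>g. C1_deriv g t) \<in> borel_measurable MC"
proof (rule borel_measurable_LIMSEQ_real)
  fix n
  have [measurable]: "(\<lambda>g. g (sq t n)) \<in> borel_measurable MC" by (rule ev_MC[OF sq_props(1)[OF t]])
  have [measurable]: "(\<lambda>g. g t) \<in> borel_measurable MC" by (rule ev_MC[OF t])
  show "(\<lambda>g. (g (sq t n) - g t) / (sq t n - t)) \<in> borel_measurable MC" by measurable
next
  fix g assume "g \<in> space MC"
  then have g: "C1_on g" by (simp add: space_MC C1_space_on)
  show "(\<lambda>n. (g (sq t n) - g t) / (sq t n - t)) \<longlonglongrightarrow> C1_deriv g t"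
    by (rule diffquot_tendsto[OF g t]) (use sq_props[OF t] in auto)
qed

lemma dist_MC:
  assumes q: "q \<in> C1_space"
  shows "(\<lambda>g. C1_dist q g) \<in> borel_measurable MC"
proof -
  have qc: "C1_on q" using q by (rule C1_space_on)
  have eq: "C1_dist q g = (SUP t\<in>Q01. \<bar>q t - g t\<bar>) + (SUP t\<in>Q01. \<bar>C1_deriv q t - C1_deriv g t\<bar>)"
    if g: "g \<in> space MC" for g
  proof -
    have gc: "C1_on g" using g by (simp add: space_MC C1_space_on)
    have c1: "continuous_on {0..1} (\<lambda>t. q t - g t)"
      using C1_on_cont[OF qc] C1_on_cont[OF gc] by (rule continuous_on_diff)
    have c2: "continuous_on {0..1} (\<lambda>t. C1_deriv q t - C1_deriv g t)"
      using C1_on_cont_deriv[OF qc] C1_on_cont_deriv[OF gc] by (rule continuous_on_diff)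
    show ?thesis unfolding C1_dist_supn supn_Q01[OF c1] supn_Q01[OF c2] ..
  qed
  have m1: "(\<lambda>g. SUP t\<in>Q01. \<bar>q t - g t\<bar>) \<in> borel_measurable MC"
  proof (rule borel_measurable_cSUP[OF countable_Q01])
    fix t assume t: "t \<in> Q01"
    then have tI: "t \<in> {0..1}" using Q01_sub by auto
    have [measurable]: "(\<lambda>g. g t) \<in> borel_measurable MC" by (rule ev_MC[OF tI])
    show "(\<lambda>g. \<bar>q t - g t\<bar>) \<in> borel_measurable MC" by measurable
  next
    fix g assume g: "g \<in> space MC"
    have gc: "C1_on g" using g by (simp add: space_MC C1_space_on)
    have c1: "continuous_on {0..1} (\<lambda>t. q t - g t)"
      using C1_on_cont[OF qc] C1_on_cont[OF gc] by (rule continuous_on_diff)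
    show "bdd_above ((\<lambda>t. \<bar>q t - g t\<bar>) ` Q01)"
      by (rule bdd_above_mono[OF supn_bdd[OF c1]]) (use Q01_sub in auto)
  qed
  have m2: "(\<lambda>g. SUP t\<in>Q01. \<bar>C1_deriv q t - C1_deriv g t\<bar>) \<in> borel_measurable MC"
  proof (rule borel_measurable_cSUP[OF countable_Q01])
    fix t assume t: "t \<in> Q01"
    then have tI: "t \<in> {0..1}" using Q01_sub by auto
    have [measurable]: "(\<lambda>g. C1_deriv g t) \<in> borel_measurable MC" by (rule evd_MC[OF tI])
    show "(\<lambda>g. \<bar>C1_deriv q t - C1_deriv g t\<bar>) \<in> borel_measurable MC" by measurable
  next
    fix g assume g: "g \<in> space MC"
    have gc: "C1_on g" using g by (simp add: space_MC C1_space_on)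
    have c2: "continuous_on {0..1} (\<lambda>t. C1_deriv q t - C1_deriv g t)"
      using C1_on_cont_deriv[OF qc] C1_on_cont_deriv[OF gc] by (rule continuous_on_diff)
    show "bdd_above ((\<lambda>t. \<bar>C1_deriv q t - C1_deriv g t\<bar>) ` Q01)"
      by (rule bdd_above_mono[OF supn_bdd[OF c2]]) (use Q01_sub in auto)
  qed
  have "(\<lambda>g. (SUP t\<in>Q01. \<bar>q t - g t\<bar>) + (SUP t\<in>Q01. \<bar>C1_deriv q t - C1_deriv g t\<bar>)) \<in> borel_measurable MC"
    using m1 m2 by (rule borel_measurable_add)
  then show ?thesis using eq measurable_cong by (smt (verit))
qed

lemma ball_MC:
  assumes q: "q \<in> C1_space"
  shows "{g\<in>C1_space. C1_dist q g < r} \<in> sets MC"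
proof -
  have [measurable]: "(\<lambda>g. C1_dist q g) \<in> borel_measurable MC" by (rule dist_MC[OF q])
  have "{g\<in>space MC. C1_dist q g < r} \<in> sets MC" by measurable
  then show ?thesis by (simp add: space_MC)
qed

lemma open_MC:
  assumes D: "countable D" "D \<subseteq> C1_space" "\<And>f e. f \<in> C1_space \<Longrightarrow> e > 0 \<Longrightarrow> \<exists>q\<in>D. C1_dist f q < e"
    and U: "C1_open U"
  shows "U \<in> sets MC"
proof -
  define B where "B = (\<lambda>(q, r). {g\<in>C1_space. C1_dist q g < r})"
  define J where "J = {(q, r). q \<in> D \<and> r \<in> \<rat> \<and> B (q, r) \<subseteq> U}"
  have cJ: "countable J"
    by (rule countable_subset[of _ "D \<times> \<rat>"]) (use D(1) countable_rat in \<open>auto simp: J_def\<close>)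
  have "U = \<Union>(B ` J)"
  proof
    show "\<Union>(B ` J) \<subseteq> U" unfolding J_def by auto
    show "U \<subseteq> \<Union>(B ` J)"
    proof
      fix f assume f: "f \<in> U"
      then have fs: "f \<in> C1_space" using U unfolding C1_open_def by auto
      obtain e where e: "e > 0" "\<forall>g\<in>C1_space. C1_dist f g < e \<longrightarrow> g \<in> U"
        using U f unfolding C1_open_def by blast
      obtain q where q: "q \<in> D" "C1_dist f q < e/3" using D(3)[OF fs, of "e/3"] e by auto
      obtain r where r: "r \<in> \<rat>" "e/3 < r" "r < 2*e/3" using Rats_dense_in_real[of "e/3" "2*e/3"] e by auto
      have qs: "q \<in> C1_space" using q D(2) by auto
      have sub: "B (q, r) \<subseteq> U"
      proof
        fix g assume g: "g \<in> B (q, r)"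
        then have gs: "g \<in> C1_space" and dg: "C1_dist q g < r" unfolding B_def by auto
        have "C1_dist f g \<le> C1_dist f q + C1_dist q g"
          by (rule C1_dist_triangle) (use fs qs gs C1_space_on in auto)
        also have "\<dots> < e" using q(2) dg r by simp
        finally show "g \<in> U" using e(2) gs by auto
      qed
      have "f \<in> B (q, r)" unfolding B_def using fs q(2) r C1_dist_sym[of q f] by auto
      moreover have "(q, r) \<in> J" unfolding J_def using q r sub by auto
      ultimately show "f \<in> \<Union>(B ` J)" by auto
    qed
  qed
  moreover have "\<Union>(B ` J) \<in> sets MC"
  proof (rule sets.countable_Union)
    show "countable (B ` J)" using cJ by simp
    show "B ` J \<subseteq> sets MC"
    proof
      fix X assume "X \<in> B ` J"
      then obtain q r where qr: "(q, r) \<in> J" "X = B (q, r)" by auto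
      then have "q \<in> C1_space" using D(2) unfolding J_def by auto
      then show "X \<in> sets MC" using qr ball_MC unfolding B_def by simp
    qed
  qed
  ultimately show ?thesis by simp
qed

lemma cyl_in_C1_borel:
  assumes "\<forall>p\<in>set ps. fst p \<in> {0..1}"
  shows "cyl ps \<in> sets C1_borel"
  using assms
proof (induction ps)
  case Nil
  have "cyl [] = space C1_borel" unfolding cyl_def space_C1_borel by simp
  then show ?case by simp
next
  case (Cons p ps)
  have t: "fst p \<in> {0..1}" using Cons.prems by simp
  have [measurable]: "(\<lambda>g. g (fst p)) \<in> borel_measurable C1_borel" by (rule ev_measurable[OF t])
  have a: "{g\<in>space C1_borel. g (fst p) \<le> snd p} \<in> sets C1_borel" by measurable
  have "cyl (p # ps) = {g\<in>space C1_borel. g (fst p) \<le> snd p} \<inter> cyl ps"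
    unfolding cyl_def space_C1_borel by auto
  then show ?case using a Cons by auto
qed

lemma sets_C1_borel_Cyl:
  assumes D: "countable D" "D \<subseteq> C1_space" "\<And>f e. f \<in> C1_space \<Longrightarrow> e > 0 \<Longrightarrow> \<exists>q\<in>D. C1_dist f q < e"
  shows "sets C1_borel = sigma_sets C1_space Cyl"
proof
  show "sets C1_borel \<subseteq> sigma_sets C1_space Cyl"
    unfolding sets_C1_borel
    by (rule sigma_sets_mono) (use open_MC[OF D] sets_MC in auto)
  show "sigma_sets C1_space Cyl \<subseteq> sets C1_borel"
  proof -
    have "sigma_sets C1_space Cyl \<subseteq> sigma_sets C1_space {U. C1_open U}"
    proof (rule sigma_sets_mono)
      show "Cyl \<subseteq> sigma_sets C1_space {U. C1_open U}"
        using cyl_in_C1_borel sets_C1_borel unfolding Cyl_def by auto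
    qed
    then show ?thesis unfolding sets_C1_borel .
  qed
qed


subsection \<open>Separability\<close>

definition BP :: "nat \<Rightarrow> real list \<Rightarrow> real \<Rightarrow> real" where
  "BP n r x = (\<Sum>k\<le>n. r!k * Bernstein n k x)"

lemma BP_cont: "continuous_on S (BP n r)"
proof -
  have "continuous_on S (\<lambda>x. \<Sum>k\<le>n. r!k * (of_nat (n choose k) * x^k * (1 - x)^(n - k)))"
    by (intro continuous_intros)
  then show ?thesis unfolding BP_def[abs_def] Bernstein_def .
qed

definition Dq :: "real \<Rightarrow> nat \<Rightarrow> real list \<Rightarrow> real \<Rightarrow> real" where
  "Dq c n r = restrict (\<lambda>t. c + integral {0..t} (BP n r)) {0..1}"

lemma Dq_props:
  shows "Dq c n r \<in> C1_space" "\<And>t. t \<in> {0..1} \<Longrightarrow> C1_deriv (Dq c n r) t = BP n r t"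
    "\<And>t. t \<in> {0..1} \<Longrightarrow> Dq c n r t = c + integral {0..t} (BP n r)"
proof -
  have d: "\<forall>t\<in>{0..1}. ((\<lambda>t. c + integral {0..t} (BP n r)) has_real_derivative BP n r t) (at t within {0..1})"
  proof
    fix t :: real assume t: "t \<in> {0..1}"
    have "((\<lambda>t. c + integral {0..t} (BP n r)) has_real_derivative 0 + BP n r t) (at t within {0..1})"
      by (rule DERIV_add[OF DERIV_const integral_has_real_derivative[OF BP_cont t]])
    then show "((\<lambda>t. c + integral {0..t} (BP n r)) has_real_derivative BP n r t) (at t within {0..1})" by simp
  qed
  have C: "C1_on (\<lambda>t. c + integral {0..t} (BP n r))" by (rule C1_onI(1)[OF BP_cont d])
  show "Dq c n r \<in> C1_space" unfolding Dq_def by (rule C1_space_restrict[OF C])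
  show "\<And>t. t \<in> {0..1} \<Longrightarrow> C1_deriv (Dq c n r) t = BP n r t"
    unfolding Dq_def using C1_on_restrict(2)[OF C] C1_onI(2)[OF BP_cont d] by simp
  show "\<And>t. t \<in> {0..1} \<Longrightarrow> Dq c n r t = c + integral {0..t} (BP n r)"
    unfolding Dq_def by simp
qed

lemma rat_approx:
  assumes "e > 0" shows "\<exists>q\<in>\<rat>. \<bar>q - (y::real)\<bar> < e"
proof -
  obtain q where "q \<in> \<rat>" "y - e < q" "q < y" using Rats_dense_in_real[of "y - e" y] assms by auto
  then show ?thesis by (intro bexI[of _ q]) auto
qed

lemma Dq_dense:
  assumes f: "f \<in> C1_space" and e: "e > 0"
  shows "\<exists>c n r. c \<in> \<rat> \<and> r \<in> lists \<rat> \<and> C1_dist f (Dq c n r) < e"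
proof -
  have fc: "C1_on f" using f by (rule C1_space_on)
  define F where "F = C1_deriv f"
  have Fc: "continuous_on {0..1} F" unfolding F_def by (rule C1_on_cont_deriv[OF fc])
  obtain N where N: "\<forall>n x. N \<le> n \<and> x \<in> {0..1} \<longrightarrow> \<bar>F x - (\<Sum>k\<le>n. F(k/n) * Bernstein n k x)\<bar> < e/8"
    using Bernstein_Weierstrass[OF Fc, of "e/8"] e by auto
  define rk where "rk k = (SOME q. q \<in> \<rat> \<and> \<bar>q - F (k/N)\<bar> < e/8)" for k :: nat
  have rk: "rk k \<in> \<rat> \<and> \<bar>rk k - F (k/N)\<bar> < e/8" for k
    unfolding rk_def by (rule someI_ex) (use rat_approx[of "e/8" "F (k/N)"] e in auto)
  define r where "r = map rk [0..<Suc N]"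
  have rr: "r!k = rk k" if "k \<le> N" for k unfolding r_def using that by (simp del: upt_Suc)
  have rQ: "r \<in> lists \<rat>" unfolding r_def using rk by auto
  obtain c where c: "c \<in> \<rat>" "\<bar>c - f 0\<bar> < e/8" using rat_approx[of "e/8" "f 0"] e by auto
  define q where "q = Dq c N r"
  have qs: "q \<in> C1_space" unfolding q_def by (rule Dq_props(1))
  have dq: "C1_deriv q t = BP N r t" if "t \<in> {0..1}" for t unfolding q_def by (rule Dq_props(2)[OF that])
  have bound: "\<bar>F x - BP N r x\<bar> \<le> e/4" if x: "x \<in> {0..1}" for x
  proof -
    have "\<bar>(\<Sum>k\<le>N. F(k/N) * Bernstein N k x) - BP N r x\<bar> = \<bar>\<Sum>k\<le>N. (F(k/N) - rk k) * Bernstein N k x\<bar>"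
      unfolding BP_def using rr by (simp add: sum_subtractf[symmetric] algebra_simps)
    also have "\<dots> \<le> (\<Sum>k\<le>N. \<bar>(F(k/N) - rk k) * Bernstein N k x\<bar>)" by (rule sum_abs)
    also have "\<dots> \<le> (\<Sum>k\<le>N. e/8 * Bernstein N k x)"
    proof (rule sum_mono)
      fix k assume "k \<in> {..N}"
      have b: "0 \<le> Bernstein N k x" using x by (intro Bernstein_nonneg) auto
      have "\<bar>F(k/N) - rk k\<bar> \<le> e/8" using rk[of k] by (simp add: abs_minus_commute)
      then show "\<bar>(F(k/N) - rk k) * Bernstein N k x\<bar> \<le> e/8 * Bernstein N k x"
        using mult_right_mono[OF \<open>\<bar>F(k/N) - rk k\<bar> \<le> e/8\<close> b] b by (simp add: abs_mult)
    qed
    also have "\<dots> = e/8 * (\<Sum>k\<le>N. Bernstein N k x)" by (rule sum_distrib_left[symmetric])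
    also have "\<dots> = e/8" by simp
    finally have a: "\<bar>(\<Sum>k\<le>N. F(k/N) * Bernstein N k x) - BP N r x\<bar> \<le> e/8" .
    have b: "\<bar>F x - (\<Sum>k\<le>N. F(k/N) * Bernstein N k x)\<bar> < e/8" using N x by auto
    show ?thesis using a b by linarith
  qed
  have vals: "\<bar>f t - q t\<bar> \<le> 3*e/8" if t: "t \<in> {0..1}" for t
  proof -
    have t0: "0 \<le> t" "t \<le> 1" using t by auto
    have "(F has_integral f t - f 0) {0..t}"
    proof (rule fundamental_theorem_of_calculus[OF t0(1)])
      fix x assume x: "x \<in> {0..t}"
      then have xI: "x \<in> {0..1}" using t by auto
      have "(f has_vector_derivative F x) (at x within {0..1})"
        using C1_onD[OF fc xI] unfolding F_def by (simp add: has_real_derivative_iff_has_vector_derivative)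
      then show "(f has_vector_derivative F x) (at x within {0..t})"
        by (rule has_vector_derivative_within_subset) (use t in auto)
    qed
    then have iF: "integral {0..t} F = f t - f 0" by (rule integral_unique)
    have cF: "continuous_on {0..t} F" by (rule continuous_on_subset[OF Fc]) (use t in auto)
    have i1: "F integrable_on {0..t}" using cF by (rule integrable_continuous_interval)
    have i2: "BP N r integrable_on {0..t}" using BP_cont by (rule integrable_continuous_interval)
    have "f t - q t = (f 0 - c) + integral {0..t} (\<lambda>x. F x - BP N r x)"
      unfolding q_def Dq_props(3)[OF t] integral_diff[OF i1 i2] iF by simp
    moreover have "\<bar>integral {0..t} (\<lambda>x. F x - BP N r x)\<bar> \<le> e/4"
    proof -
      have "norm (integral {0..t} (\<lambda>x. F x - BP N r x)) \<le> integral {0..t} (\<lambda>x. e/4)"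
      proof (rule integral_norm_bound_integral)
        show "(\<lambda>x. F x - BP N r x) integrable_on {0..t}" using i1 i2 by (rule integrable_diff)
        show "(\<lambda>x. e/4) integrable_on {0..t}" by (rule integrable_const_ivl)
        fix x assume "x \<in> {0..t}"
        then have "x \<in> {0..1}" using t by auto
        then show "norm (F x - BP N r x) \<le> e/4" using bound by simp
      qed
      also have "\<dots> = t * (e/4)" using t0 by simp
      also have "\<dots> \<le> e/4" using t0 e by (simp add: mult_left_le_one_le)
      finally show ?thesis by simp
    qed
    ultimately show ?thesis using c(2) by linarith
  qed
  have qc: "C1_on q" using qs by (rule C1_space_on)
  have "C1_dist f q \<le> 3*e/8 + e/4"
    unfolding C1_dist_supn
  proof (rule add_mono)
    show "supn (\<lambda>t. f t - q t) \<le> 3*e/8" by (rule supn_least) (rule vals)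
    show "supn (\<lambda>t. C1_deriv f t - C1_deriv q t) \<le> e/4"
      by (rule supn_least) (use bound dq in \<open>simp add: F_def\<close>)
  qed
  also have "\<dots> < e" using e by simp
  finally show ?thesis using c(1) rQ unfolding q_def by blast
qed

lemma dense_exists:
  "\<exists>D. countable D \<and> D \<subseteq> C1_space \<and> (\<forall>f\<in>C1_space. \<forall>e>0. \<exists>q\<in>D. C1_dist f q < e)"
proof (intro exI conjI)
  define D where "D = (\<lambda>(c, n, r). Dq c n r) ` (\<rat> \<times> (UNIV :: nat set) \<times> lists \<rat>)"
  show "countable D" unfolding D_def
    by (intro countable_image countable_SIGMA countable_rat countable_lists countableI_type)
  show "D \<subseteq> C1_space" unfolding D_def using Dq_props(1) by auto
  show "\<forall>f\<in>C1_space. \<forall>e>0. \<exists>q\<in>D. C1_dist f q < e"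
  proof (intro ballI allI impI)
    fix f :: "real \<Rightarrow> real" and e :: real assume "f \<in> C1_space" "e > 0"
    then obtain c n r where "c \<in> \<rat>" "r \<in> lists \<rat>" "C1_dist f (Dq c n r) < e" using Dq_dense by blast
    moreover have "Dq c n r \<in> D" unfolding D_def using \<open>c \<in> \<rat>\<close> \<open>r \<in> lists \<rat>\<close>
      by (intro image_eqI[of _ _ "(c, n, r)"]) auto
    ultimately show "\<exists>q\<in>D. C1_dist f q < e" by blast
  qed
qed

lemma sets_C1_borel_eq: "sets C1_borel = sigma_sets C1_space Cyl"
proof -
  obtain D where D: "countable D" "D \<subseteq> C1_space" "\<forall>f\<in>C1_space. \<forall>e>0. \<exists>q\<in>D. C1_dist f q < e"
    using dense_exists by blast
  show ?thesis by (rule sets_C1_borel_Cyl[OF D(1,2)]) (use D(3) in blast)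
qed




lemma tau_cong: "(\<And>q. q \<in> Q01 \<Longrightarrow> S q = S' q) \<Longrightarrow> tau S v = tau S' v"
  unfolding tau_def by (intro SUP_cong) auto

lemma tau_borel: "tau S \<in> borel_measurable borel"
proof -
  have "(\<lambda>v. tau S v) \<in> borel_measurable borel" unfolding tau_def
  proof (rule borel_measurable_cSUP[OF countable_Q01])
    fix q assume "q \<in> Q01"
    show "(\<lambda>v. if S q < v then q else 0) \<in> borel_measurable borel" by measurable
  qed (rule tau_bdd)
  then show ?thesis by simp
qed

lemma pred_list_sets:
  fixes f :: "'p \<times> real \<Rightarrow> 'x \<Rightarrow> real"
  assumes "\<forall>p\<in>set ps. f p \<in> borel_measurable M"
  shows "{x\<in>space M. \<forall>p\<in>set ps. f p x \<le> snd p} \<in> sets M"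
  using assms
proof (induction ps)
  case Nil then show ?case by simp
next
  case (Cons p ps)
  have [measurable]: "f p \<in> borel_measurable M" using Cons.prems by simp
  have "f p -` {..snd p} \<inter> space M \<in> sets M"
    by (rule measurable_sets[OF Cons.prems[rule_format, of p]]) (simp, intro borel_closed closed_atMost)
  moreover have "f p -` {..snd p} \<inter> space M = {x\<in>space M. f p x \<le> snd p}" by auto
  ultimately have a: "{x\<in>space M. f p x \<le> snd p} \<in> sets M" by simp
  have "{x\<in>space M. \<forall>p\<in>set (p # ps). f p x \<le> snd p} = {x\<in>space M. f p x \<le> snd p} \<inter> {x\<in>space M. \<forall>p\<in>set ps. f p x \<le> snd p}"
    by auto
  then show ?case using a Cons by auto
qed

locale side =
  fixes M :: "'a measure" and \<xi> :: "real \<Rightarrow> real" and ash asc :: "'a \<Rightarrow> real"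
    and h :: "'a \<Rightarrow> real \<Rightarrow> real" and \<mu>sh \<mu>sc :: real
  assumes P: "prob_space M"
    and xi: "C1_on \<xi>" and cnt: "countable {t\<in>{0..1}. C1_deriv \<xi> t = 0}"
    and a_meas: "ash \<in> borel_measurable M" "asc \<in> borel_measurable M"
    and asc_nz: "measure M {\<omega>\<in>space M. asc \<omega> = 0} = 0"
    and a_int: "integrable M ash" "integrable M asc"
    and mean: "integral\<^sup>L M ash = \<mu>sh" "integral\<^sup>L M asc = \<mu>sc"
    and h_rv: "C1_rv M h"
    and h_ae: "AE \<omega> in M. (\<forall>t\<in>{0..1}. C1_deriv (h \<omega>) t > 0) \<and> h \<omega> 0 = 0 \<and> h \<omega> 1 = 1"
    and h_inv: "\<forall>t\<in>{0..1}. integrable M (\<lambda>\<omega>. inv_into {0..1} (h \<omega>) t) \<and>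
                   (\<integral>\<omega>. inv_into {0..1} (h \<omega>) t \<partial>M) = t"
    and Ft_meas: "(\<lambda>\<omega>. restrict (\<lambda>t. ash \<omega> + asc \<omega> * \<xi> (h \<omega> t)) {0..1}) \<in> M \<rightarrow>\<^sub>M C1_borel"
begin

abbreviation "Ft \<equiv> (\<lambda>\<omega>. restrict (\<lambda>t. ash \<omega> + asc \<omega> * \<xi> (h \<omega> t)) {0..1})"

lemma asc_ae: "AE \<omega> in M. asc \<omega> \<noteq> 0"
proof -
  interpret prob_space M by (rule P)
  have s: "{\<omega>\<in>space M. asc \<omega> = 0} \<in> sets M" using a_meas(2) by measurable
  have "emeasure M {\<omega>\<in>space M. asc \<omega> = 0} = 0"
    using asc_nz emeasure_eq_measure by simp
  then have "{\<omega>\<in>space M. asc \<omega> = 0} \<in> null_sets M" using s by auto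
  then have "AE \<omega> in M. \<omega> \<notin> {\<omega>\<in>space M. asc \<omega> = 0}" using AE_iff_null_sets s by blast
  then show ?thesis using AE_space by eventually_elim auto
qed

lemma h_C1: "\<omega> \<in> space M \<Longrightarrow> C1_on (h \<omega>)"
proof -
  assume w: "\<omega> \<in> space M"
  have "restrict (h \<omega>) {0..1} \<in> C1_space"
    using measurable_space[OF h_rv[unfolded C1_rv_def] w] space_C1_borel by simp
  then have c: "C1_on (restrict (h \<omega>) {0..1})" by (rule C1_space_on)
  show "C1_on (h \<omega>)" by (rule C1_on_cong(1)[OF c]) simp
qed

lemma good: "AE \<omega> in M. model (h \<omega>) \<xi> (asc \<omega>)"
  using h_ae asc_ae AE_space
proof (eventually_elim)
  case (elim \<omega>)
  show ?case
    unfolding model_def warp_def model_axioms_def using elim(1,2) h_C1[OF elim(3)] xi cnt by auto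
qed

lemma Ft_meas': "(\<lambda>\<omega>. G (Ft \<omega>)) \<in> borel_measurable M" if "G \<in> borel_measurable C1_borel"
  by (rule measurable_compose[OF Ft_meas that])

lemma tau_mean:
  assumes v: "v \<in> {0..1}"
  shows "(\<integral>\<omega>. tau (sf (Ft \<omega>)) v \<partial>M) = tau (sx \<xi>) v"
proof -
  have tI: "tau (sx \<xi>) v \<in> {0..1}" by (rule tau_sx(1)[OF xi cnt v])
  have "(\<integral>\<omega>. tau (sf (Ft \<omega>)) v \<partial>M) = (\<integral>\<omega>. inv_into {0..1} (h \<omega>) (tau (sx \<xi>) v) \<partial>M)"
  proof (rule integral_cong_AE)
    show "(\<lambda>\<omega>. tau (sf (Ft \<omega>)) v) \<in> borel_measurable M" by (rule Ft_meas'[OF tau_sf_measurable])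
    show "(\<lambda>\<omega>. inv_into {0..1} (h \<omega>) (tau (sx \<xi>) v)) \<in> borel_measurable M"
      using h_inv tI by (blast intro: borel_measurable_integrable)
    show "AE \<omega> in M. tau (sf (Ft \<omega>)) v = inv_into {0..1} (h \<omega>) (tau (sx \<xi>) v)"
      using good by eventually_elim (rule model.tau_gt[OF _ v])
  qed
  also have "\<dots> = tau (sx \<xi>) v" using h_inv tI by blast
  finally show ?thesis .
qed

lemma h_rep: "AE \<omega> in M. \<forall>t\<in>{0..1}. h \<omega> t = tau (sx \<xi>) (sf (Ft \<omega>) t)"
  using good
proof eventually_elim
  case (elim \<omega>) show ?case using model.h_rec[OF elim, where a="ash \<omega>"] by simp
qed

lemma F_rep: "AE \<omega> in M. \<forall>u\<in>{0..1}. Ft \<omega> (tau (sf (Ft \<omega>)) u) = ash \<omega> + asc \<omega> * \<xi> (tau (sx \<xi>) u)"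
  using good
proof eventually_elim
  case (elim \<omega>) show ?case using model.gt_tau[OF elim, where a="ash \<omega>"] by simp
qed

lemma F_measurable: "(\<lambda>g. g (tau (sf g) u)) \<in> borel_measurable C1_borel"
  by (rule comp_measurable[OF tau_sf_measurable]) (use tau_range in auto)

lemma F_mean:
  assumes u: "u \<in> {0..1}"
  shows "(\<integral>\<omega>. Ft \<omega> (tau (sf (Ft \<omega>)) u) \<partial>M) = \<mu>sh + \<mu>sc * \<xi> (tau (sx \<xi>) u)"
proof -
  have "(\<integral>\<omega>. Ft \<omega> (tau (sf (Ft \<omega>)) u) \<partial>M) = (\<integral>\<omega>. ash \<omega> + asc \<omega> * \<xi> (tau (sx \<xi>) u) \<partial>M)"
  proof (rule integral_cong_AE)
    show "(\<lambda>\<omega>. Ft \<omega> (tau (sf (Ft \<omega>)) u)) \<in> borel_measurable M" by (rule Ft_meas'[OF F_measurable])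
    show "(\<lambda>\<omega>. ash \<omega> + asc \<omega> * \<xi> (tau (sx \<xi>) u)) \<in> borel_measurable M"
      using a_meas by measurable
    show "AE \<omega> in M. Ft \<omega> (tau (sf (Ft \<omega>)) u) = ash \<omega> + asc \<omega> * \<xi> (tau (sx \<xi>) u)"
      using F_rep by eventually_elim (use u in auto)
  qed
  also have "\<dots> = (\<integral>\<omega>. ash \<omega> \<partial>M) + (\<integral>\<omega>. asc \<omega> * \<xi> (tau (sx \<xi>) u) \<partial>M)"
  proof (rule Bochner_Integration.integral_add)
    show "integrable M ash" by (rule a_int(1))
    show "integrable M (\<lambda>\<omega>. asc \<omega> * \<xi> (tau (sx \<xi>) u))" using a_int(2) by (rule integrable_mult_left)
  qed
  also have "\<dots> = \<mu>sh + \<mu>sc * \<xi> (tau (sx \<xi>) u)"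
    using mean by (simp add: integral_mult_left_zero)
  finally show ?thesis .
qed

end




context side begin

lemma int_rep:
  fixes G :: "(real \<Rightarrow> real) \<Rightarrow> real"
  assumes "G \<in> borel_measurable C1_borel"
  shows "(\<integral>\<omega>. G (Ft \<omega>) \<partial>M) = integral\<^sup>L (distr M C1_borel Ft) G"
  using integral_distr[OF Ft_meas assms] by simp

lemma cyl_rep:
  assumes ps: "\<forall>p\<in>set ps. fst p \<in> {0..1}"
    and \<Phi>: "\<And>t. t \<in> {0..1} \<Longrightarrow> \<Phi> t \<in> borel_measurable C1_borel"
    and rep: "AE \<omega> in M. \<forall>t\<in>{0..1}. h \<omega> t = \<Phi> t (Ft \<omega>)"
  shows "emeasure (distr M C1_borel (\<lambda>\<omega>. restrict (h \<omega>) {0..1})) (cyl ps)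
       = emeasure (distr M C1_borel Ft) {g\<in>space C1_borel. \<forall>p\<in>set ps. \<Phi> (fst p) g \<le> snd p}"
proof -
  have Hm: "(\<lambda>\<omega>. restrict (h \<omega>) {0..1}) \<in> M \<rightarrow>\<^sub>M C1_borel" using h_rv unfolding C1_rv_def .
  have X: "cyl ps \<in> sets C1_borel" by (rule cyl_in_C1_borel[OF ps])
  have Y: "{g\<in>space C1_borel. \<forall>p\<in>set ps. \<Phi> (fst p) g \<le> snd p} \<in> sets C1_borel"
    by (rule pred_list_sets) (use \<Phi> ps in auto)
  have "emeasure (distr M C1_borel (\<lambda>\<omega>. restrict (h \<omega>) {0..1})) (cyl ps)
      = emeasure M ((\<lambda>\<omega>. restrict (h \<omega>) {0..1}) -` cyl ps \<inter> space M)"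
    by (rule emeasure_distr[OF Hm X])
  also have "\<dots> = emeasure M (Ft -` {g\<in>space C1_borel. \<forall>p\<in>set ps. \<Phi> (fst p) g \<le> snd p} \<inter> space M)"
  proof (rule emeasure_eq_AE)
    show "(\<lambda>\<omega>. restrict (h \<omega>) {0..1}) -` cyl ps \<inter> space M \<in> sets M" by (rule measurable_sets[OF Hm X])
    show "Ft -` {g\<in>space C1_borel. \<forall>p\<in>set ps. \<Phi> (fst p) g \<le> snd p} \<inter> space M \<in> sets M"
      by (rule measurable_sets[OF Ft_meas Y])
    show "AE \<omega> in M. (\<omega> \<in> (\<lambda>\<omega>. restrict (h \<omega>) {0..1}) -` cyl ps \<inter> space M) =
               (\<omega> \<in> Ft -` {g\<in>space C1_borel. \<forall>p\<in>set ps. \<Phi> (fst p) g \<le> snd p} \<inter> space M)"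
      using rep AE_space
    proof eventually_elim
      case (elim \<omega>)
      have a: "restrict (h \<omega>) {0..1} \<in> C1_space" using measurable_space[OF Hm elim(2)] space_C1_borel by simp
      have b: "Ft \<omega> \<in> space C1_borel" using measurable_space[OF Ft_meas elim(2)] .
      have c: "\<forall>p\<in>set ps. h \<omega> (fst p) = \<Phi> (fst p) (Ft \<omega>)" using elim(1) ps by auto
      show ?case unfolding cyl_def using a b c elim(2) ps by auto
    qed
  qed
  also have "\<dots> = emeasure (distr M C1_borel Ft) {g\<in>space C1_borel. \<forall>p\<in>set ps. \<Phi> (fst p) g \<le> snd p}"
    by (rule emeasure_distr[OF Ft_meas Y, symmetric])
  finally show ?thesis .
qed

lemma pair_rep:
  assumes \<Theta>: "\<Theta> \<in> C1_borel \<rightarrow>\<^sub>M (borel :: (real \<times> real) measure)"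
    and rep: "AE \<omega> in M. \<Theta> (Ft \<omega>) = (ash \<omega>, asc \<omega>)"
  shows "distr M borel (\<lambda>\<omega>. (ash \<omega>, asc \<omega>)) = distr (distr M C1_borel Ft) borel \<Theta>"
proof -
  have [measurable]: "ash \<in> borel_measurable M" "asc \<in> borel_measurable M" using a_meas by auto
  have m: "(\<lambda>\<omega>. (ash \<omega>, asc \<omega>)) \<in> M \<rightarrow>\<^sub>M (borel :: (real \<times> real) measure)" by measurable
  have "distr M borel (\<lambda>\<omega>. (ash \<omega>, asc \<omega>)) = distr M borel (\<lambda>\<omega>. \<Theta> (Ft \<omega>))"
  proof (rule distr_cong_AE)
    show "AE \<omega> in M. (ash \<omega>, asc \<omega>) = \<Theta> (Ft \<omega>)" using rep by eventually_elim simp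
    show "(\<lambda>\<omega>. (ash \<omega>, asc \<omega>)) \<in> M \<rightarrow>\<^sub>M borel" by (rule m)
    show "(\<lambda>\<omega>. \<Theta> (Ft \<omega>)) \<in> M \<rightarrow>\<^sub>M borel" by (rule measurable_compose[OF Ft_meas \<Theta>])
  qed simp_all
  also have "\<dots> = distr (distr M C1_borel Ft) borel \<Theta>"
    using distr_distr[OF \<Theta> Ft_meas] by (simp add: o_def)
  finally show ?thesis .
qed

lemma distr_prob: "prob_space (distr M C1_borel (\<lambda>\<omega>. restrict (h \<omega>) {0..1}))"
  using prob_space.prob_space_distr[OF P] h_rv unfolding C1_rv_def by blast

end

lemma Int_stable_Cyl: "Int_stable Cyl"
proof (rule Int_stableI)
  fix a b assume "a \<in> Cyl" "b \<in> Cyl"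
  then obtain ps qs where "a = cyl ps" "\<forall>p\<in>set ps. fst p \<in> {0..1}" "b = cyl qs" "\<forall>p\<in>set qs. fst p \<in> {0..1}"
    unfolding Cyl_def by auto
  moreover have "cyl ps \<inter> cyl qs = cyl (ps @ qs)" unfolding cyl_def by auto
  ultimately show "a \<inter> b \<in> Cyl" unfolding Cyl_def by (intro CollectI exI[of _ "ps @ qs"]) auto
qed

lemma C1_space_Cyl: "C1_space \<in> Cyl"
proof -
  have "C1_space = cyl []" unfolding cyl_def by simp
  then show ?thesis unfolding Cyl_def by auto
qed



theorem corollary1:
  fixes M1 :: "'a measure" and M2 :: "'b measure"
    and \<xi>1 \<xi>2 :: "real \<Rightarrow> real"
    and ash1 asc1 :: "'a \<Rightarrow> real" and ash2 asc2 :: "'b \<Rightarrow> real"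
    and h1 :: "'a \<Rightarrow> real \<Rightarrow> real" and h2 :: "'b \<Rightarrow> real \<Rightarrow> real"
    and \<mu>sh \<mu>sc :: real
  assumes P1: "prob_space M1" and P2: "prob_space M2"
    and xi1: "C1_on \<xi>1" "countable {t\<in>{0..1}. C1_deriv \<xi>1 t = 0}"
    and xi2: "C1_on \<xi>2" "countable {t\<in>{0..1}. C1_deriv \<xi>2 t = 0}"
    and a1_meas: "ash1 \<in> borel_measurable M1" "asc1 \<in> borel_measurable M1"
    and a2_meas: "ash2 \<in> borel_measurable M2" "asc2 \<in> borel_measurable M2"
    and asc1_nz: "measure M1 {\<omega>\<in>space M1. asc1 \<omega> = 0} = 0"
    and asc2_nz: "measure M2 {\<omega>\<in>space M2. asc2 \<omega> = 0} = 0"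
    and a1_int: "integrable M1 ash1" "integrable M1 asc1"
    and a2_int: "integrable M2 ash2" "integrable M2 asc2"
    and mean1: "integral\<^sup>L M1 ash1 = \<mu>sh" "integral\<^sup>L M1 asc1 = \<mu>sc"
    and mean2: "integral\<^sup>L M2 ash2 = \<mu>sh" "integral\<^sup>L M2 asc2 = \<mu>sc"
    and musc: "\<mu>sc \<noteq> 0"
    and h1_rv: "C1_rv M1 h1" and h2_rv: "C1_rv M2 h2"
    and h1_ae: "AE \<omega> in M1. (\<forall>t\<in>{0..1}. C1_deriv (h1 \<omega>) t > 0) \<and> h1 \<omega> 0 = 0 \<and> h1 \<omega> 1 = 1"
    and h2_ae: "AE \<omega> in M2. (\<forall>t\<in>{0..1}. C1_deriv (h2 \<omega>) t > 0) \<and> h2 \<omega> 0 = 0 \<and> h2 \<omega> 1 = 1"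
    and h1_inv: "\<forall>t\<in>{0..1}. integrable M1 (\<lambda>\<omega>. inv_into {0..1} (h1 \<omega>) t) \<and>
                   (\<integral>\<omega>. inv_into {0..1} (h1 \<omega>) t \<partial>M1) = t"
    and h2_inv: "\<forall>t\<in>{0..1}. integrable M2 (\<lambda>\<omega>. inv_into {0..1} (h2 \<omega>) t) \<and>
                   (\<integral>\<omega>. inv_into {0..1} (h2 \<omega>) t \<partial>M2) = t"
    and eqd: "C1_eqd M1 (\<lambda>\<omega>. (\<lambda>t. ash1 \<omega> + asc1 \<omega> * \<xi>1 t) \<circ> h1 \<omega>)
                    M2 (\<lambda>\<omega>. (\<lambda>t. ash2 \<omega> + asc2 \<omega> * \<xi>2 t) \<circ> h2 \<omega>)"
  shows "C1_eqd M1 h1 M2 h2 \<and> (\<forall>t\<in>{0..1}. \<xi>1 t = \<xi>2 t) \<and>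
         distr M1 borel (\<lambda>\<omega>. (ash1 \<omega>, asc1 \<omega>)) = distr M2 borel (\<lambda>\<omega>. (ash2 \<omega>, asc2 \<omega>))"

proof -
  have Ft1: "(\<lambda>\<omega>. restrict (\<lambda>t. ash1 \<omega> + asc1 \<omega> * \<xi>1 (h1 \<omega> t)) {0..1}) \<in> M1 \<rightarrow>\<^sub>M C1_borel"
    using eqd unfolding C1_eqd_def C1_rv_def by (simp add: o_def)
  have Ft2: "(\<lambda>\<omega>. restrict (\<lambda>t. ash2 \<omega> + asc2 \<omega> * \<xi>2 (h2 \<omega> t)) {0..1}) \<in> M2 \<rightarrow>\<^sub>M C1_borel"
    using eqd unfolding C1_eqd_def C1_rv_def by (simp add: o_def)
  have Q: "distr M1 C1_borel (\<lambda>\<omega>. restrict (\<lambda>t. ash1 \<omega> + asc1 \<omega> * \<xi>1 (h1 \<omega> t)) {0..1})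
         = distr M2 C1_borel (\<lambda>\<omega>. restrict (\<lambda>t. ash2 \<omega> + asc2 \<omega> * \<xi>2 (h2 \<omega> t)) {0..1})"
    using eqd unfolding C1_eqd_def by (simp add: o_def)
  interpret s1: side M1 \<xi>1 ash1 asc1 h1 \<mu>sh \<mu>sc
    by (rule side.intro) (fact P1 xi1 a1_meas asc1_nz a1_int mean1 h1_rv h1_ae h1_inv Ft1)+
  interpret s2: side M2 \<xi>2 ash2 asc2 h2 \<mu>sh \<mu>sc
    by (rule side.intro) (fact P2 xi2 a2_meas asc2_nz a2_int mean2 h2_rv h2_ae h2_inv Ft2)+
  have int_eq: "(\<integral>\<omega>. G (s1.Ft \<omega>) \<partial>M1) = (\<integral>\<omega>. G (s2.Ft \<omega>) \<partial>M2)"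
    if "G \<in> borel_measurable C1_borel" for G :: "(real \<Rightarrow> real) \<Rightarrow> real"
    using s1.int_rep[OF that] s2.int_rep[OF that] Q by simp
  have tau_eqI: "tau (sx \<xi>1) v = tau (sx \<xi>2) v" if v: "v \<in> {0..1}" for v
    using s1.tau_mean[OF v] s2.tau_mean[OF v] int_eq[OF tau_sf_measurable[of v]] by simp
  have sx_eq: "sx \<xi>1 x = sx \<xi>2 x" if x: "x \<in> {0..1}" for x
  proof -
    define v where "v = sx \<xi>1 x"
    have v: "v \<in> {0..1}" unfolding v_def by (rule sx_range[OF xi1 x])
    have "tau (sx \<xi>2) v = x" using tau_eqI[OF v] tau_sx_sx[OF xi1 x] unfolding v_def by simp
    then show ?thesis using tau_sx(2)[OF xi2 v] unfolding v_def by simp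
  qed
  have tau_same: "tau (sx \<xi>2) v = tau (sx \<xi>1) v" for v
    by (rule tau_cong) (use sx_eq Q01_sub in auto)
  define \<tau> where "\<tau> = tau (sx \<xi>1)"
  have xi_tau: "\<xi>1 (\<tau> u) = \<xi>2 (\<tau> u)" if u: "u \<in> {0..1}" for u
  proof -
    have "\<mu>sh + \<mu>sc * \<xi>1 (\<tau> u) = \<mu>sh + \<mu>sc * \<xi>2 (\<tau> u)"
      using s1.F_mean[OF u] s2.F_mean[OF u] int_eq[OF s1.F_measurable[of u]] tau_same[of u]
      unfolding \<tau>_def by simp
    then show ?thesis using musc by simp
  qed
  have xi_eq: "\<xi>1 x = \<xi>2 x" if x: "x \<in> {0..1}" for x
    using xi_tau[OF sx_range[OF xi1 x]] tau_sx_sx[OF xi1 x] unfolding \<tau>_def by simp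
  have hdist: "C1_eqd M1 h1 M2 h2"
  proof -
    define \<Phi> where "\<Phi> t g = \<tau> (sf g t)" for t g
    have \<Phi>m: "\<Phi> t \<in> borel_measurable C1_borel" if t: "t \<in> {0..1}" for t
      unfolding \<Phi>_def[abs_def] \<tau>_def
      by (rule measurable_compose[OF sf_measurable[OF t] tau_borel])
    have rep1: "AE \<omega> in M1. \<forall>t\<in>{0..1}. h1 \<omega> t = \<Phi> t (s1.Ft \<omega>)"
      using s1.h_rep unfolding \<Phi>_def \<tau>_def .
    have rep2: "AE \<omega> in M2. \<forall>t\<in>{0..1}. h2 \<omega> t = \<Phi> t (s2.Ft \<omega>)"
      using s2.h_rep unfolding \<Phi>_def \<tau>_def tau_same .
    have "distr M1 C1_borel (\<lambda>\<omega>. restrict (h1 \<omega>) {0..1}) = distr M2 C1_borel (\<lambda>\<omega>. restrict (h2 \<omega>) {0..1})"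
    proof (rule measure_eqI_generator_eq[OF Int_stable_Cyl Cyl_sub, where A="\<lambda>_. C1_space"])
      fix X assume "X \<in> Cyl"
      then obtain ps where ps: "X = cyl ps" "\<forall>p\<in>set ps. fst p \<in> {0..1}" unfolding Cyl_def by auto
      show "emeasure (distr M1 C1_borel (\<lambda>\<omega>. restrict (h1 \<omega>) {0..1})) X = emeasure (distr M2 C1_borel (\<lambda>\<omega>. restrict (h2 \<omega>) {0..1})) X"
        using s1.cyl_rep[OF ps(2) \<Phi>m rep1] s2.cyl_rep[OF ps(2) \<Phi>m rep2] Q ps(1) by simp
    next
      show "sets (distr M1 C1_borel (\<lambda>\<omega>. restrict (h1 \<omega>) {0..1})) = sigma_sets C1_space Cyl"
        using sets_C1_borel_eq by simp
      show "sets (distr M2 C1_borel (\<lambda>\<omega>. restrict (h2 \<omega>) {0..1})) = sigma_sets C1_space Cyl"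
        using sets_C1_borel_eq by simp
      show "range (\<lambda>_. C1_space) \<subseteq> Cyl" using C1_space_Cyl by auto
      show "(\<Union>i::nat. C1_space) = C1_space" by simp
      show "emeasure (distr M1 C1_borel (\<lambda>\<omega>. restrict (h1 \<omega>) {0..1})) C1_space \<noteq> \<infinity>" for i :: nat
      proof -
        interpret pd: prob_space "distr M1 C1_borel (\<lambda>\<omega>. restrict (h1 \<omega>) {0..1})" by (rule s1.distr_prob)
        show ?thesis using pd.emeasure_finite[of C1_space] by simp
      qed
    qed
    then show ?thesis unfolding C1_eqd_def using h1_rv h2_rv by simp
  qed
  have adist: "distr M1 borel (\<lambda>\<omega>. (ash1 \<omega>, asc1 \<omega>)) = distr M2 borel (\<lambda>\<omega>. (ash2 \<omega>, asc2 \<omega>))"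
  proof -
    have d1: "\<forall>t\<in>{0..1}. (\<xi>1 has_real_derivative C1_deriv \<xi>1 t) (at t within {0..1})"
      using C1_onD[OF xi1(1)] by blast
    obtain x0 where x0: "x0 \<in> {0..1}" "\<xi>1 x0 \<noteq> \<xi>1 0"
      using nonconst_of_countable[OF d1 xi1(2)] by blast
    define u0 where "u0 = sx \<xi>1 x0"
    have u0: "u0 \<in> {0..1}" unfolding u0_def by (rule sx_range[OF xi1 x0(1)])
    have tu0: "\<tau> u0 = x0" unfolding u0_def \<tau>_def by (rule tau_sx_sx[OF xi1 x0(1)])
    have t0: "\<tau> 0 = 0" unfolding \<tau>_def using tau_sx_sx[OF xi1, of 0] sx_0 by simp
    define Fu where "Fu u g = g (tau (sf g) u)" for u and g :: "real \<Rightarrow> real"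
    have [measurable]: "Fu u \<in> borel_measurable C1_borel" for u
      unfolding Fu_def[abs_def] by (rule s1.F_measurable)
    define \<Theta> where "\<Theta> g = (Fu 0 g - (Fu u0 g - Fu 0 g) / (\<xi>1 x0 - \<xi>1 0) * \<xi>1 0, (Fu u0 g - Fu 0 g) / (\<xi>1 x0 - \<xi>1 0))" for g
    have \<Theta>m: "\<Theta> \<in> C1_borel \<rightarrow>\<^sub>M (borel :: (real \<times> real) measure)" unfolding \<Theta>_def[abs_def] by measurable
    have \<Theta>eq: "\<Theta> g = (a, b)" if "Fu u0 g = a + b * \<xi>1 x0" "Fu 0 g = a + b * \<xi>1 0" for g a b
    proof -
      have "(Fu u0 g - Fu 0 g) / (\<xi>1 x0 - \<xi>1 0) = b"
        using that x0(2) by (simp add: field_simps)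
      then show ?thesis unfolding \<Theta>_def using that by simp
    qed
    have rep1: "AE \<omega> in M1. \<Theta> (s1.Ft \<omega>) = (ash1 \<omega>, asc1 \<omega>)"
      using s1.F_rep
    proof eventually_elim
      case (elim \<omega>)
      have "Fu u0 (s1.Ft \<omega>) = ash1 \<omega> + asc1 \<omega> * \<xi>1 x0" "Fu 0 (s1.Ft \<omega>) = ash1 \<omega> + asc1 \<omega> * \<xi>1 0"
        unfolding Fu_def using elim u0 tu0 t0 unfolding \<tau>_def by auto
      then show ?case by (rule \<Theta>eq)
    qed
    have rep2: "AE \<omega> in M2. \<Theta> (s2.Ft \<omega>) = (ash2 \<omega>, asc2 \<omega>)"
      using s2.F_rep
    proof eventually_elim
      case (elim \<omega>)
      have "\<xi>2 x0 = \<xi>1 x0" "\<xi>2 0 = \<xi>1 0" using xi_eq x0(1) by auto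
      then have "Fu u0 (s2.Ft \<omega>) = ash2 \<omega> + asc2 \<omega> * \<xi>1 x0" "Fu 0 (s2.Ft \<omega>) = ash2 \<omega> + asc2 \<omega> * \<xi>1 0"
        unfolding Fu_def using elim u0 tu0 t0 tau_same unfolding \<tau>_def by auto
      then show ?case by (rule \<Theta>eq)
    qed
    show ?thesis using s1.pair_rep[OF \<Theta>m rep1] s2.pair_rep[OF \<Theta>m rep2] Q by simp
  qed
  show ?thesis using hdist xi_eq adist by blast
qed


end
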